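(* Suppose that for all integers $n\ge3$, $d\ge0$ and $j$ with $2\le j\le n-1$ one has \[ b_{n,d}(1,j)+b_{n,d}(j,1)=2\,p_{n,d}(1,j). \] Then for every $n\ge1$ and every $d$ with $0\le d\le\lfloor (n-1)/2\rfloor$, the number of ballot permutations of $[n]$ with exactly $d$ descents equals the number of odd order permutations of $[n]$ with cyclic weight $d$, i.e. $b_{n,d}=p_{n,d}$.
   Context: For a permutation $\pi=\pi_1\cdots\pi_n$ of $[n]$ (one-line notation), an ascent is a position $t$ with $\pi_t<\pi_{t+1}$ and a descent one with $\pi_t>\pi_{t+1}$; the height of a word is its number of ascents minus its number of descents. $\pi$ is a ballot permutation if every prefix $\pi_1\cdots\pi_t$ has nonnegative height. $\mathscr{B}_{n,d}$ is the set of ballot permutations of $[n]$ with exactly $d$ descents, $b_{n,d}=\lvert\mathscr{B}_{n,d}\rvert$, and $b_{n,d}(i,j)$ is the number of $\pi\in\mathscr{B}_{n,d}$ containing $i\,n\,j$ as a factor ($\pi_t=i,\pi_{t+1}=n,\pi_{t+2}=j$ for some $t$). A cycle $(c_1\cdots c_k)$ means $c_1\mapsto c_2\mapsto\cdots\mapsto c_k\mapsto c_1$; $\operatorname{cdes}(c)=\lvert\{t\in[k]:c_t>c_{t+1}\}\rvert$, $\operatorname{casc}(c)=\lvert\{t\in[k]:c_t<c_{t+1}\}\rvert$ with $c_{k+1}=c_1$; the cyclic weight of a cycle is $\min(\operatorname{cdes}(c),\operatorname{casc}(c))$ and that of a permutation is the sum over its cycles. An odd order permutation has all cycles of odd length.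 $\mathscr{P}_{n,d}$ is the set of odd order permutations of $[n]$ with cyclic weight $d$, $p_{n,d}=\lvert\mathscr{P}_{n,d}\rvert$, and $p_{n,d}(i,j)$ is the number of $\pi\in\mathscr{P}_{n,d}$ with $\pi(i)=n$ and $\pi(n)=j$ (i.e. containing $i\,n\,j$ as a cyclic factor). *)

theory Defs
  imports "HOL-Combinatorics.Combinatorics"
begin

(* One-line notation: a permutation of [n] is a list in permutations_of_set {1..n}.
   Positions are 0-based internally. *)

definition asc :: "nat list \<Rightarrow> nat" where
  "asc w = card {t. Suc t < length w \<and> w ! t < w ! Suc t}"

definition des :: "nat list \<Rightarrow> nat" where
  "des w = card {t. Suc t < length w \<and> w ! t > w ! Suc t}"

definition height :: "nat list \<Rightarrow> int" where
  "height w = int (asc w) - int (des w)"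

definition ballot :: "nat list \<Rightarrow> bool" where
  "ballot w \<longleftrightarrow> (\<forall>t \<le> length w. height (take t w) \<ge> 0)"

definition ballot_perms :: "nat \<Rightarrow> nat \<Rightarrow> nat list set" where
  "ballot_perms n d = {w \<in> permutations_of_set {1..n}. ballot w \<and> des w = d}"

definition b :: "nat \<Rightarrow> nat \<Rightarrow> nat" where
  "b n d = card (ballot_perms n d)"

definition b_factor :: "nat \<Rightarrow> nat \<Rightarrow> nat \<Rightarrow> nat \<Rightarrow> nat" where
  "b_factor n d i j = card {w \<in> ballot_perms n d.
      \<exists>t. t + 2 < length w \<and> w ! t = i \<and> w ! (t+1) = n \<and> w ! (t+2) = j}"

definition cycle_of :: "(nat \<Rightarrow> nat) \<Rightarrow> nat \<Rightarrow> nat set" where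
  "cycle_of \<sigma> x = {(\<sigma> ^^ k) x | k. True}"

definition cycles :: "nat \<Rightarrow> (nat \<Rightarrow> nat) \<Rightarrow> nat set set" where
  "cycles n \<sigma> = cycle_of \<sigma> ` {1..n}"

(* cyclic descents / ascents of a cycle C of sigma: positions t with c_t > c_{t+1} = sigma c_t *)
definition cdes :: "(nat \<Rightarrow> nat) \<Rightarrow> nat set \<Rightarrow> nat" where
  "cdes \<sigma> C = card {y \<in> C. y > \<sigma> y}"

definition casc :: "(nat \<Rightarrow> nat) \<Rightarrow> nat set \<Rightarrow> nat" where
  "casc \<sigma> C = card {y \<in> C. y < \<sigma> y}"

definition cyclic_weight :: "nat \<Rightarrow> (nat \<Rightarrow> nat) \<Rightarrow> nat" where
  "cyclic_weight n \<sigma> = (\<Sum>C \<in> cycles n \<sigma>. min (cdes \<sigma> C) (casc \<sigma> C))"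

definition odd_order :: "nat \<Rightarrow> (nat \<Rightarrow> nat) \<Rightarrow> bool" where
  "odd_order n \<sigma> \<longleftrightarrow> (\<forall>C \<in> cycles n \<sigma>. odd (card C))"

definition odd_perms :: "nat \<Rightarrow> nat \<Rightarrow> (nat \<Rightarrow> nat) set" where
  "odd_perms n d = {\<sigma>. \<sigma> permutes {1..n} \<and> odd_order n \<sigma> \<and> cyclic_weight n \<sigma> = d}"

definition p :: "nat \<Rightarrow> nat \<Rightarrow> nat" where
  "p n d = card (odd_perms n d)"

definition p_factor :: "nat \<Rightarrow> nat \<Rightarrow> nat \<Rightarrow> nat \<Rightarrow> nat" where
  "p_factor n d i j = card {\<sigma> \<in> odd_perms n d. \<sigma> i = n \<and> \<sigma> n = j}"

end

theory Submission
  imports Defs "HOL-Library.Sublist"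
begin

lemma cycle_of_self: "x \<in> cycle_of \<sigma> x"
  unfolding cycle_of_def by (auto intro: exI[of _ 0])

lemma cycle_of_closed: "y \<in> cycle_of \<sigma> x \<Longrightarrow> \<sigma> y \<in> cycle_of \<sigma> x"
proof -
  assume "y \<in> cycle_of \<sigma> x"
  then obtain k where "y = (\<sigma> ^^ k) x" unfolding cycle_of_def by blast
  then have "\<sigma> y = (\<sigma> ^^ Suc k) x" by simp
  then show ?thesis unfolding cycle_of_def by blast
qed

lemma cycle_of_funpow: "(\<sigma> ^^ k) x \<in> cycle_of \<sigma> x"
  unfolding cycle_of_def by auto

lemma inv_funpow_ex:
  assumes "\<sigma> permutes S" "finite S"
  shows "\<exists>k. inv \<sigma> y = (\<sigma> ^^ k) y"
proof -
  have "permutation \<sigma>" using assms permutes_imp_permutation by blast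
  then obtain k where k: "k > 0" "(\<sigma> ^^ k) y = y" using permutation_self by metis
  have "\<sigma> ((\<sigma> ^^ (k - 1)) y) = y" using k
    by (metis Suc_diff_1 comp_apply funpow.simps(2))
  then have "inv \<sigma> y = (\<sigma> ^^ (k - 1)) y" using permutes_inv_eq[OF assms(1)] by blast
  then show ?thesis by blast
qed

lemma cycle_of_inv_closed:
  assumes "\<sigma> permutes S" "finite S" "y \<in> cycle_of \<sigma> x"
  shows "inv \<sigma> y \<in> cycle_of \<sigma> x"
proof -
  obtain k where k: "inv \<sigma> y = (\<sigma> ^^ k) y" using inv_funpow_ex[OF assms(1,2)] by blast
  obtain l where l: "y = (\<sigma> ^^ l) x" using assms(3) unfolding cycle_of_def by blast
  have "inv \<sigma> y = (\<sigma> ^^ (k + l)) x" using k l by (simp add: funpow_add)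
  then show ?thesis using cycle_of_funpow by metis
qed

lemma cycle_of_sub_inv:
  assumes "\<sigma> permutes S" "finite S"
  shows "cycle_of (inv \<sigma>) x \<subseteq> cycle_of \<sigma> x"
proof
  fix y assume "y \<in> cycle_of (inv \<sigma>) x"
  then obtain k where k: "y = (inv \<sigma> ^^ k) x" unfolding cycle_of_def by blast
  have "(inv \<sigma> ^^ k) x \<in> cycle_of \<sigma> x"
    by (induction k) (auto simp: cycle_of_self cycle_of_inv_closed[OF assms])
  then show "y \<in> cycle_of \<sigma> x" using k by simp
qed

lemma cycle_of_inv:
  assumes "\<sigma> permutes S" "finite S"
  shows "cycle_of (inv \<sigma>) x = cycle_of \<sigma> x"
proof
  show "cycle_of (inv \<sigma>) x \<subseteq> cycle_of \<sigma> x" using cycle_of_sub_inv[OF assms] .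
  have "cycle_of (inv (inv \<sigma>)) x \<subseteq> cycle_of (inv \<sigma>) x"
    using cycle_of_sub_inv[OF permutes_inv[OF assms(1)] assms(2)] .
  then show "cycle_of \<sigma> x \<subseteq> cycle_of (inv \<sigma>) x" using permutes_inv_inv[OF assms(1)] by simp
qed

lemma cycle_of_subset:
  assumes "\<sigma> permutes S" "x \<in> S"
  shows "cycle_of \<sigma> x \<subseteq> S"
  unfolding cycle_of_def using permutes_in_funpow_image[OF assms] by auto

lemma cycles_inv:
  assumes "\<sigma> permutes S" "finite S"
  shows "cycles n (inv \<sigma>) = cycles n \<sigma>"
  unfolding cycles_def using cycle_of_inv[OF assms] by simp

lemma cdes_inv:
  assumes "\<sigma> permutes {1..n}" "C \<in> cycles n \<sigma>"
  shows "cdes (inv \<sigma>) C = casc \<sigma> C" "casc (inv \<sigma>) C = cdes \<sigma> C"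
proof -
  obtain x where C: "C = cycle_of \<sigma> x" using assms(2) unfolding cycles_def by blast
  have inj: "inj \<sigma>" using assms(1) permutes_inj by blast
  have clo: "\<sigma> y \<in> C" if "y \<in> C" for y using cycle_of_closed that C by blast
  have cloi: "inv \<sigma> y \<in> C" if "y \<in> C" for y using cycle_of_inv_closed[OF assms(1) _ that[unfolded C]] C by blast
  have e1: "{y \<in> C. y > inv \<sigma> y} = \<sigma> ` {z \<in> C. z < \<sigma> z}"
  proof (rule set_eqI, rule iffI)
    fix y assume "y \<in> {y \<in> C. y > inv \<sigma> y}"
    then have "inv \<sigma> y \<in> {z \<in> C. z < \<sigma> z}" "\<sigma> (inv \<sigma> y) = y"
      using cloi permutes_inverses[OF assms(1)] by auto
    then show "y \<in> \<sigma> ` {z \<in> C. z < \<sigma> z}" by (intro image_eqI[of y \<sigma> "inv \<sigma> y"]) auto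
  next
    fix y assume "y \<in> \<sigma> ` {z \<in> C. z < \<sigma> z}"
    then obtain z where "z \<in> C" "z < \<sigma> z" "y = \<sigma> z" by blast
    then show "y \<in> {y \<in> C. y > inv \<sigma> y}" using clo permutes_inverses[OF assms(1)] by auto
  qed
  have e2: "{y \<in> C. y < inv \<sigma> y} = \<sigma> ` {z \<in> C. z > \<sigma> z}"
  proof (rule set_eqI, rule iffI)
    fix y assume "y \<in> {y \<in> C. y < inv \<sigma> y}"
    then have "inv \<sigma> y \<in> {z \<in> C. z > \<sigma> z}" "\<sigma> (inv \<sigma> y) = y"
      using cloi permutes_inverses[OF assms(1)] by auto
    then show "y \<in> \<sigma> ` {z \<in> C. z > \<sigma> z}" by (intro image_eqI[of y \<sigma> "inv \<sigma> y"]) auto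
  next
    fix y assume "y \<in> \<sigma> ` {z \<in> C. z > \<sigma> z}"
    then obtain z where "z \<in> C" "z > \<sigma> z" "y = \<sigma> z" by blast
    then show "y \<in> {y \<in> C. y < inv \<sigma> y}" using clo permutes_inverses[OF assms(1)] by auto
  qed
  show "cdes (inv \<sigma>) C = casc \<sigma> C" unfolding cdes_def casc_def e1
    using inj by (simp add: card_image inj_on_subset)
  show "casc (inv \<sigma>) C = cdes \<sigma> C" unfolding cdes_def casc_def e2
    using inj by (simp add: card_image inj_on_subset)
qed

lemma weight_inv:
  assumes "\<sigma> permutes {1..n}"
  shows "cyclic_weight n (inv \<sigma>) = cyclic_weight n \<sigma>"
  unfolding cyclic_weight_def cycles_inv[OF assms finite_atLeastAtMost]
proof (rule sum.cong)
  fix C assume "C \<in> cycles n \<sigma>"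
  then show "min (cdes (inv \<sigma>) C) (casc (inv \<sigma>) C) = min (cdes \<sigma> C) (casc \<sigma> C)"
    using cdes_inv[OF assms] by (metis min.commute)
qed simp

lemma odd_order_inv:
  assumes "\<sigma> permutes {1..n}"
  shows "odd_order n (inv \<sigma>) = odd_order n \<sigma>"
  unfolding odd_order_def cycles_inv[OF assms finite_atLeastAtMost] ..

lemma inv_in_odd:
  assumes "\<sigma> \<in> odd_perms n d" "\<sigma> i = n" "\<sigma> n = j"
  shows "inv \<sigma> \<in> odd_perms n d" "inv \<sigma> j = n" "inv \<sigma> n = i"
proof -
  have P: "\<sigma> permutes {1..n}" using assms unfolding odd_perms_def by blast
  show "inv \<sigma> \<in> odd_perms n d" using assms(1) permutes_inv[OF P] odd_order_inv[OF P] weight_inv[OF P]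
    unfolding odd_perms_def by simp
  show "inv \<sigma> j = n" "inv \<sigma> n = i" using assms(2,3) permutes_inverses(2)[OF P] by metis+
qed

lemma p_factor_sym:
  "p_factor n d i j = p_factor n d j i"
proof -
  let ?A = "{\<sigma> \<in> odd_perms n d. \<sigma> i = n \<and> \<sigma> n = j}"
  let ?B = "{\<sigma> \<in> odd_perms n d. \<sigma> j = n \<and> \<sigma> n = i}"
  have "inv ` ?A = ?B"
  proof (rule set_eqI, rule iffI)
    fix \<tau> assume "\<tau> \<in> inv ` ?A"
    then obtain \<sigma> where s: "\<sigma> \<in> ?A" "\<tau> = inv \<sigma>" by blast
    show "\<tau> \<in> ?B" using inv_in_odd[of \<sigma> n d i j] s by simp
  next
    fix \<tau> assume t: "\<tau> \<in> ?B"
    then have P: "\<tau> permutes {1..n}" unfolding odd_perms_def by blast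
    have h1: "inv \<tau> \<in> ?A" using inv_in_odd[of \<tau> n d j i] t by simp
    have h2: "\<tau> = inv (inv \<tau>)" using permutes_inv_inv[OF P] by simp
    show "\<tau> \<in> inv ` ?A" by (rule image_eqI[where f=inv, OF h2 h1])
  qed
  moreover have inj: "inj_on inv ?A"
  proof (rule inj_onI)
    fix x y assume xy: "x \<in> ?A" "y \<in> ?A" and e: "inv x = inv y"
    have px: "x permutes {1..n}" using xy(1) unfolding odd_perms_def by blast
    have py: "y permutes {1..n}" using xy(2) unfolding odd_perms_def by blast
    have "x = inv (inv x)" using permutes_inv_inv[OF px] by simp
    also have "\<dots> = inv (inv y)" using e by simp
    also have "\<dots> = y" using permutes_inv_inv[OF py] by simp
    finally show "x = y" .
  qed
  ultimately have "card ?B = card ?A" using card_image[OF inj] by simp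
  then show ?thesis unfolding p_factor_def by simp
qed

lemma conj_funpow:
  assumes "r permutes S"
  shows "((r \<circ> \<sigma> \<circ> inv r) ^^ k) x = r ((\<sigma> ^^ k) (inv r x))"
proof (induction k)
  case 0 then show ?case using permutes_inverses(1)[OF assms] by simp
next
  case (Suc k)
  have "((r \<circ> \<sigma> \<circ> inv r) ^^ Suc k) x = (r \<circ> \<sigma> \<circ> inv r) (((r \<circ> \<sigma> \<circ> inv r) ^^ k) x)" by simp
  also have "\<dots> = r (\<sigma> (inv r (r ((\<sigma> ^^ k) (inv r x)))))" by (simp only: Suc.IH comp_apply)
  also have "\<dots> = r ((\<sigma> ^^ Suc k) (inv r x))" using permutes_inverses(2)[OF assms] by simp
  finally show ?case .
qed

lemma conj_cycle_of:
  assumes "r permutes S"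
  shows "cycle_of (r \<circ> \<sigma> \<circ> inv r) (r x) = r ` cycle_of \<sigma> x"
proof -
  have "((r \<circ> \<sigma> \<circ> inv r) ^^ k) (r x) = r ((\<sigma> ^^ k) x)" for k
    using conj_funpow[OF assms, where \<sigma>=\<sigma> and k=k and x="r x"] permutes_inverses(2)[OF assms] by simp
  then show ?thesis unfolding cycle_of_def by auto
qed

lemma conj_cycles:
  assumes "r permutes {1..n}"
  shows "cycles n (r \<circ> \<sigma> \<circ> inv r) = (\<lambda>C. r ` C) ` cycles n \<sigma>"
proof -
  have "cycles n (r \<circ> \<sigma> \<circ> inv r) = cycle_of (r \<circ> \<sigma> \<circ> inv r) ` (r ` {1..n})"
    unfolding cycles_def using permutes_image[OF assms] by simp
  also have "\<dots> = (\<lambda>x. cycle_of (r \<circ> \<sigma> \<circ> inv r) (r x)) ` {1..n}" by (simp add: image_image)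
  also have "\<dots> = (\<lambda>x. r ` cycle_of \<sigma> x) ` {1..n}" using conj_cycle_of[OF assms] by simp
  also have "\<dots> = (\<lambda>C. r ` C) ` cycles n \<sigma>" unfolding cycles_def by (simp add: image_image)
  finally show ?thesis .
qed

lemma conj_cdes:
  assumes "r permutes S"
  shows "cdes (r \<circ> \<sigma> \<circ> inv r) (r ` C) = card {x \<in> C. r (\<sigma> x) < r x}"
        "casc (r \<circ> \<sigma> \<circ> inv r) (r ` C) = card {x \<in> C. r x < r (\<sigma> x)}"
proof -
  have inj: "inj r" using permutes_inj[OF assms] .
  have k: "(r \<circ> \<sigma> \<circ> inv r) (r x) = r (\<sigma> x)" for x using permutes_inverses(2)[OF assms] by simp
  have "{y \<in> r ` C. y > (r \<circ> \<sigma> \<circ> inv r) y} = r ` {x \<in> C. r (\<sigma> x) < r x}"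
    using k by auto
  then show "cdes (r \<circ> \<sigma> \<circ> inv r) (r ` C) = card {x \<in> C. r (\<sigma> x) < r x}"
    unfolding cdes_def using inj by (simp add: card_image inj_on_subset)
  have "{y \<in> r ` C. y < (r \<circ> \<sigma> \<circ> inv r) y} = r ` {x \<in> C. r x < r (\<sigma> x)}"
    using k by auto
  then show "casc (r \<circ> \<sigma> \<circ> inv r) (r ` C) = card {x \<in> C. r x < r (\<sigma> x)}"
    unfolding casc_def using inj by (simp add: card_image inj_on_subset)
qed

lemma conj_preserve:
  assumes r: "r permutes {1..n}"
    and cd: "\<And>C. C \<in> cycles n \<sigma> \<Longrightarrow> card {x \<in> C. r (\<sigma> x) < r x} = cdes \<sigma> C"
    and ca: "\<And>C. C \<in> cycles n \<sigma> \<Longrightarrow> card {x \<in> C. r x < r (\<sigma> x)} = casc \<sigma> C"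
  shows "odd_order n (r \<circ> \<sigma> \<circ> inv r) = odd_order n \<sigma>"
    "cyclic_weight n (r \<circ> \<sigma> \<circ> inv r) = cyclic_weight n \<sigma>"
proof -
  have inj: "inj r" using permutes_inj[OF r] .
  have injI: "inj_on (\<lambda>C. r ` C) X" for X
    by (rule inj_onI) (use inj in \<open>simp add: inj_image_eq_iff\<close>)
  show "odd_order n (r \<circ> \<sigma> \<circ> inv r) = odd_order n \<sigma>"
    unfolding odd_order_def conj_cycles[OF r] using inj by (simp add: card_image inj_on_subset)
  have "cyclic_weight n (r \<circ> \<sigma> \<circ> inv r)
      = (\<Sum>C \<in> cycles n \<sigma>. min (cdes (r \<circ> \<sigma> \<circ> inv r) (r ` C)) (casc (r \<circ> \<sigma> \<circ> inv r) (r ` C)))"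
    unfolding cyclic_weight_def conj_cycles[OF r] by (subst sum.reindex[OF injI]) simp
  also have "\<dots> = cyclic_weight n \<sigma>"
    unfolding cyclic_weight_def conj_cdes[OF r] using cd ca by (intro sum.cong) auto
  finally show "cyclic_weight n (r \<circ> \<sigma> \<circ> inv r) = cyclic_weight n \<sigma>" .
qed

definition rot :: "nat \<Rightarrow> nat \<Rightarrow> nat" where
  "rot m x = (if x = 1 then m else if 2 \<le> x \<and> x \<le> m then x - 1 else x)"

definition rotinv :: "nat \<Rightarrow> nat \<Rightarrow> nat" where
  "rotinv m x = (if x = m then 1 else if 1 \<le> x \<and> x < m then x + 1 else x)"

lemma rot_rotinv: "1 \<le> m \<Longrightarrow> rot m (rotinv m x) = x"
  unfolding rot_def rotinv_def by auto

lemma rotinv_rot: "1 \<le> m \<Longrightarrow> rotinv m (rot m x) = x"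
  unfolding rot_def rotinv_def by auto

lemma rot_permutes:
  assumes "1 \<le> m" "m \<le> n"
  shows "rot m permutes {1..n}"
proof (rule bij_imp_permutes)
  show "bij_betw (rot m) {1..n} {1..n}"
    by (rule bij_betw_byWitness[where f'="rotinv m"])
       (use assms in \<open>auto simp: rot_rotinv rotinv_rot, auto simp: rot_def rotinv_def\<close>)
  show "x \<notin> {1..n} \<Longrightarrow> rot m x = x" for x using assms unfolding rot_def by auto
qed

lemma inv_rot:
  assumes "1 \<le> m" "m \<le> n"
  shows "inv (rot m) = rotinv m"
proof
  fix x show "inv (rot m) x = rotinv m x"
    using permutes_inv_eq[OF rot_permutes[OF assms]] rot_rotinv[OF assms(1)] by blast
qed

lemma rot_mono:
  assumes "m = n - 1" "2 \<le> u" "u \<le> n" "2 \<le> v" "v \<le> n"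
  shows "rot m u < rot m v \<longleftrightarrow> u < v"
  using assms unfolding rot_def by auto

lemma rot_key:
  assumes n3: "3 \<le> n" and m: "m = n - 1" and P: "\<sigma> permutes {1..n}"
    and s1: "\<sigma> 1 \<noteq> n" and sn: "\<sigma> n \<noteq> 1" and C: "C \<in> cycles n \<sigma>"
  shows "card {x \<in> C. rot m (\<sigma> x) < rot m x} = cdes \<sigma> C"
    "card {x \<in> C. rot m x < rot m (\<sigma> x)} = casc \<sigma> C"
proof -
  obtain x0 where x0: "x0 \<in> {1..n}" "C = cycle_of \<sigma> x0" using C unfolding cycles_def by blast
  have CS: "C \<subseteq> {1..n}" using cycle_of_subset[OF P x0(1)] x0(2) by simp
  have fin: "finite C" using CS finite_subset by blast
  have clo: "\<sigma> y \<in> C" if "y \<in> C" for y using cycle_of_closed that x0(2) by blast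
  have inS: "\<sigma> y \<in> {1..n}" if "y \<in> {1..n}" for y using permutes_in_image[OF P] that by blast
  have mono: "rot m (\<sigma> x) < rot m x \<longleftrightarrow> \<sigma> x < x" "rot m x < rot m (\<sigma> x) \<longleftrightarrow> x < \<sigma> x"
    if "x \<in> C" "x \<noteq> 1" "\<sigma> x \<noteq> 1" for x
  proof -
    have "\<sigma> x \<in> C" using clo that(1) by blast
    then have "x \<in> {1..n}" "\<sigma> x \<in> {1..n}" using that CS by auto
    then show "rot m (\<sigma> x) < rot m x \<longleftrightarrow> \<sigma> x < x" "rot m x < rot m (\<sigma> x) \<longleftrightarrow> x < \<sigma> x"
      using rot_mono[OF m] that by auto
  qed
  have "card {x \<in> C. rot m (\<sigma> x) < rot m x} = card {x \<in> C. \<sigma> x < x} \<and>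
        card {x \<in> C. rot m x < rot m (\<sigma> x)} = card {x \<in> C. x < \<sigma> x}"
  proof (cases "1 \<in> C \<and> \<sigma> 1 \<noteq> 1")
    case False
    have ne: "\<sigma> x \<noteq> 1" if "x \<in> C" "x \<noteq> 1" for x
    proof
      assume h: "\<sigma> x = 1"
      then have "1 \<in> C" using clo that by metis
      then have "\<sigma> 1 = 1" using False by blast
      then have "\<sigma> x = \<sigma> 1" using h by simp
      then show False using permutes_inj[OF P] that(2) by (simp add: inj_eq)
    qed
    have e1: "{x \<in> C. rot m (\<sigma> x) < rot m x} = {x \<in> C. \<sigma> x < x}"
    proof (rule Collect_cong)
      fix x show "(x \<in> C \<and> rot m (\<sigma> x) < rot m x) = (x \<in> C \<and> \<sigma> x < x)"
      proof (cases "x \<in> C \<and> x = 1")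
        case True then have "\<sigma> x = 1" using False by blast
        then show ?thesis using True by simp
      next
        case F: False then show ?thesis using mono ne by blast
      qed
    qed
    have e2: "{x \<in> C. rot m x < rot m (\<sigma> x)} = {x \<in> C. x < \<sigma> x}"
    proof (rule Collect_cong)
      fix x show "(x \<in> C \<and> rot m x < rot m (\<sigma> x)) = (x \<in> C \<and> x < \<sigma> x)"
      proof (cases "x \<in> C \<and> x = 1")
        case True then have "\<sigma> x = 1" using False by blast
        then show ?thesis using True by simp
      next
        case F: False then show ?thesis using mono ne by blast
      qed
    qed
    show ?thesis using e1 e2 by simp
  next
    case True
    define a where "a = inv \<sigma> 1"
    define b where "b = \<sigma> 1"
    have aC: "a \<in> C" unfolding a_def using cycle_of_inv_closed[OF P _ ] True x0(2) by blast
    have sa: "\<sigma> a = 1" unfolding a_def using permutes_inverses(1)[OF P] by simp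
    have a1: "a \<noteq> 1" using sa True by auto
    have an: "a \<noteq> n" using sa sn by auto
    have "a \<in> {1..n}" using aC CS by blast
    then have aR: "2 \<le> a" "a \<le> m" using a1 an m by auto
    have bR: "2 \<le> b" "b \<le> m" using True inS[of 1] s1 m n3 unfolding b_def by auto
    have ne: "\<sigma> x \<noteq> 1" if "x \<in> C" "x \<noteq> a" for x
    proof
      assume "\<sigma> x = 1"
      then have "\<sigma> x = \<sigma> a" using sa by simp
      then show False using permutes_inj[OF P] that(2) by (simp add: inj_eq)
    qed
    have rot1: "rot m 1 = m" unfolding rot_def by simp
    have rota: "rot m a = a - 1" using aR unfolding rot_def by auto
    have rotb: "rot m b = b - 1" using bR unfolding rot_def by auto
    let ?S1 = "{x \<in> C. \<sigma> x < x}" and ?S2 = "{x \<in> C. rot m (\<sigma> x) < rot m x}"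
    let ?T1 = "{x \<in> C. x < \<sigma> x}" and ?T2 = "{x \<in> C. rot m x < rot m (\<sigma> x)}"
    have eS: "?S2 = insert 1 (?S1 - {a})"
    proof (rule set_eqI)
      fix x
      show "x \<in> ?S2 \<longleftrightarrow> x \<in> insert 1 (?S1 - {a})"
      proof (cases "x = 1")
        case True then show ?thesis using rot1 rotb bR True \<open>1 \<in> C \<and> \<sigma> 1 \<noteq> 1\<close> a1 unfolding b_def by auto
      next
        case x1: False
        show ?thesis
        proof (cases "x = a")
          case True then show ?thesis using sa rot1 rota aR x1 by auto
        next
          case False then show ?thesis using mono[of x] ne[of x] x1 by auto
        qed
      qed
    qed
    have eT: "?T2 = insert a (?T1 - {1})"
    proof (rule set_eqI)
      fix x
      show "x \<in> ?T2 \<longleftrightarrow> x \<in> insert a (?T1 - {1})"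
      proof (cases "x = 1")
        case True then show ?thesis using rot1 rotb bR True \<open>1 \<in> C \<and> \<sigma> 1 \<noteq> 1\<close> a1 unfolding b_def by auto
      next
        case x1: False
        show ?thesis
        proof (cases "x = a")
          case True then show ?thesis using sa rot1 rota aR x1 aC by auto
        next
          case False then show ?thesis using mono[of x] ne[of x] x1 by auto
        qed
      qed
    qed
    have aS1: "a \<in> ?S1" using aC sa aR by auto
    have oT1: "1 \<in> ?T1" using True bR unfolding b_def by auto
    have c1: "card ?S2 = card ?S1"
    proof -
      have "\<sigma> 1 \<ge> 2" using bR unfolding b_def by simp
      then have "1 \<notin> ?S1 - {a}" by auto
      then have "card ?S2 = Suc (card (?S1 - {a}))" using eS fin by simp
      also have "\<dots> = card ?S1" using aS1 fin card_Suc_Diff1[of ?S1 a] by simp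
      finally show ?thesis .
    qed
    have c2: "card ?T2 = card ?T1"
    proof -
      have "a \<notin> ?T1 - {1}" using sa aR by auto
      then have "card ?T2 = Suc (card (?T1 - {1}))" using eT fin by simp
      also have "\<dots> = card ?T1" using oT1 fin card_Suc_Diff1[of ?T1 1] by simp
      finally show ?thesis .
    qed
    show ?thesis using c1 c2 by simp
  qed
  then show "card {x \<in> C. rot m (\<sigma> x) < rot m x} = cdes \<sigma> C"
    "card {x \<in> C. rot m x < rot m (\<sigma> x)} = casc \<sigma> C"
    unfolding cdes_def casc_def by auto
qed

lemma conj_rot_preserve:
  assumes n3: "3 \<le> n" and P: "\<sigma> permutes {1..n}" and s1: "\<sigma> 1 \<noteq> n" and sn: "\<sigma> n \<noteq> 1"
  shows "odd_order n (rot (n-1) \<circ> \<sigma> \<circ> rotinv (n-1)) = odd_order n \<sigma>"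
    "cyclic_weight n (rot (n-1) \<circ> \<sigma> \<circ> rotinv (n-1)) = cyclic_weight n \<sigma>"
proof -
  have m: "1 \<le> n - 1" "n - 1 \<le> n" using n3 by auto
  have r: "rot (n-1) permutes {1..n}" using rot_permutes[OF m] .
  have e: "rotinv (n-1) = inv (rot (n-1))" using inv_rot[OF m] by simp
  show "odd_order n (rot (n-1) \<circ> \<sigma> \<circ> rotinv (n-1)) = odd_order n \<sigma>"
    "cyclic_weight n (rot (n-1) \<circ> \<sigma> \<circ> rotinv (n-1)) = cyclic_weight n \<sigma>"
    unfolding e using conj_preserve[OF r, of \<sigma>] rot_key[OF n3 refl P s1 sn] by auto
qed

lemma p_factor_shift:
  assumes n3: "3 \<le> n" and i: "2 \<le> i" "i \<le> n - 1" and j: "2 \<le> j" "j \<le> n - 1"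
  shows "p_factor n d i j = p_factor n d (i - 1) (j - 1)"
proof -
  define m where "m = n - 1"
  have m1: "1 \<le> m" "m \<le> n" using n3 unfolding m_def by auto
  have r: "rot m permutes {1..n}" using rot_permutes[OF m1] .
  have ri: "rotinv m permutes {1..n}" using permutes_inv[OF r] inv_rot[OF m1] by simp
  define c where "c = (\<lambda>\<sigma>. rot m \<circ> \<sigma> \<circ> rotinv m)"
  let ?A = "{\<sigma> \<in> odd_perms n d. \<sigma> i = n \<and> \<sigma> n = j}"
  let ?B = "{\<sigma> \<in> odd_perms n d. \<sigma> (i - 1) = n \<and> \<sigma> n = j - 1}"
  have rotn: "rot m n = n" "rotinv m n = n" using n3 unfolding m_def rot_def rotinv_def by auto
  have roti: "rot m i = i - 1" "rot m j = j - 1" using i j unfolding m_def rot_def by auto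
  have rotii: "rotinv m (i - 1) = i" "rotinv m (j - 1) = j" using i j unfolding m_def rotinv_def by auto
  have pres: "odd_order n (c \<sigma>) = odd_order n \<sigma> \<and> cyclic_weight n (c \<sigma>) = cyclic_weight n \<sigma>"
    if P: "\<sigma> permutes {1..n}" and si: "\<sigma> i = n" and sj: "\<sigma> n = j" for \<sigma>
  proof -
    have s1: "\<sigma> 1 \<noteq> n"
    proof
      assume "\<sigma> 1 = n"
      then have "\<sigma> 1 = \<sigma> i" using si by simp
      then show False using permutes_inj[OF P] i by (simp add: inj_eq)
    qed
    have sn: "\<sigma> n \<noteq> 1" using sj j by simp
    show ?thesis using conj_rot_preserve[OF n3 P s1 sn] unfolding c_def m_def by simp
  qed
  have cperm: "c \<sigma> permutes {1..n}" if "\<sigma> permutes {1..n}" for \<sigma>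
    unfolding c_def using permutes_compose[OF permutes_compose[OF ri that] r] by (simp add: comp_assoc)
  have img: "c ` ?A = ?B"
  proof (rule set_eqI, rule iffI)
    fix \<tau> assume "\<tau> \<in> c ` ?A"
    then obtain \<sigma> where s: "\<sigma> \<in> ?A" and t: "\<tau> = c \<sigma>" by blast
    have P: "\<sigma> permutes {1..n}" using s unfolding odd_perms_def by blast
    have "c \<sigma> (i - 1) = n" "c \<sigma> n = j - 1" using s rotn roti rotii unfolding c_def by auto
    moreover have "c \<sigma> \<in> odd_perms n d" using pres[OF P] s cperm[OF P] unfolding odd_perms_def by simp
    ultimately show "\<tau> \<in> ?B" using t by simp
  next
    fix \<tau> assume t: "\<tau> \<in> ?B"
    have P: "\<tau> permutes {1..n}" using t unfolding odd_perms_def by blast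
    define \<sigma> where "\<sigma> = rotinv m \<circ> \<tau> \<circ> rot m"
    have Ps: "\<sigma> permutes {1..n}"
      unfolding \<sigma>_def using permutes_compose[OF permutes_compose[OF r P] ri] by (simp add: comp_assoc)
    have ct: "c \<sigma> = \<tau>" unfolding c_def \<sigma>_def using rot_rotinv[OF m1(1)] by (simp add: fun_eq_iff)
    have si: "\<sigma> i = n" "\<sigma> n = j" using t rotn roti rotii unfolding \<sigma>_def by auto
    have "\<sigma> \<in> odd_perms n d" using pres[OF Ps si] ct t Ps unfolding odd_perms_def by simp
    then have "\<sigma> \<in> ?A" using si by simp
    then show "\<tau> \<in> c ` ?A" using ct by (intro image_eqI[where f=c and x=\<sigma>]) auto
  qed
  have inj: "inj_on c ?A"
  proof (rule inj_onI)
    fix x y assume "x \<in> ?A" "y \<in> ?A" and e: "c x = c y"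
    have "x z = y z" for z
    proof -
      have "c x (rot m z) = c y (rot m z)" using e by simp
      then have "rot m (x z) = rot m (y z)" unfolding c_def using rotinv_rot[OF m1(1)] by simp
      then show ?thesis using rotinv_rot[OF m1(1)] by metis
    qed
    then show "x = y" by (simp add: fun_eq_iff)
  qed
  have "card ?B = card ?A" using card_image[OF inj] img by simp
  then show ?thesis unfolding p_factor_def by simp
qed

lemma card_partition:
  assumes "finite S" "S = A \<union> (\<Union>x\<in>I. F x)" "finite I"
    "\<And>x. x \<in> I \<Longrightarrow> A \<inter> F x = {}"
    "\<And>x y. x \<in> I \<Longrightarrow> y \<in> I \<Longrightarrow> x \<noteq> y \<Longrightarrow> F x \<inter> F y = {}"
  shows "card S = card A + (\<Sum>x\<in>I. card (F x))"
proof -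
  have fA: "finite A" and fF: "\<And>x. x \<in> I \<Longrightarrow> finite (F x)" using assms(1,2) by (auto intro: finite_subset)
  have "card (\<Union>x\<in>I. F x) = (\<Sum>x\<in>I. card (F x))"
    using assms(3,5) fF by (intro card_UN_disjoint) auto
  moreover have "A \<inter> (\<Union>x\<in>I. F x) = {}" using assms(4) by blast
  ultimately show ?thesis using assms(2) fA fF assms(3) by (simp add: card_Un_disjoint)
qed

lemma sum_pairs:
  "(\<Sum>x\<in>Sigma {1..(m::nat)} (\<lambda>i. {1..m} - {i}). f (fst x) (snd x)) = (\<Sum>i\<in>{1..m}. \<Sum>j\<in>{1..m} - {i}. f i j)"
proof -
  have "(\<Sum>i\<in>{1..m}. \<Sum>j\<in>{1..m} - {i}. f i j) = (\<Sum>(i, j)\<in>Sigma {1..m} (\<lambda>i. {1..m} - {i}). f i j)"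
    by (rule sum.Sigma) auto
  then show ?thesis by (simp add: split_def)
qed

lemma odd_perms_fix:
  assumes "2 \<le> n"
  shows "{\<sigma> \<in> odd_perms n d. \<sigma> n = n} = odd_perms (n - 1) d"
proof -
  have key: "\<sigma> permutes {1..n-1} \<and> odd_order (n-1) \<sigma> \<and> cyclic_weight (n-1) \<sigma> = d
        \<longleftrightarrow> \<sigma> permutes {1..n} \<and> odd_order n \<sigma> \<and> cyclic_weight n \<sigma> = d \<and> \<sigma> n = n" for \<sigma>
  proof -
    have U: "{1..n} = insert n {1..n-1}" using assms by auto
    have nn: "n \<notin> {1..n-1}" by auto
    have perm: "\<sigma> permutes {1..n-1} \<longleftrightarrow> \<sigma> permutes {1..n} \<and> \<sigma> n = n"
    proof
      assume h: "\<sigma> permutes {1..n-1}"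
      then show "\<sigma> permutes {1..n} \<and> \<sigma> n = n"
        using permutes_subset[OF h, of "{1..n}"] permutes_not_in[OF h nn] by auto
    next
      assume h: "\<sigma> permutes {1..n} \<and> \<sigma> n = n"
      show "\<sigma> permutes {1..n-1}" unfolding permutes_def
      proof (intro conjI allI impI)
        fix x assume "x \<notin> {1..n-1}"
        then show "\<sigma> x = x" using h permutes_not_in[of \<sigma> "{1..n}" x] by (cases "x = n") auto
      next
        fix y show "\<exists>!x. \<sigma> x = y" using h unfolding permutes_def by blast
      qed
    qed
    have rest: "odd_order (n-1) \<sigma> = odd_order n \<sigma> \<and> cyclic_weight (n-1) \<sigma> = cyclic_weight n \<sigma>"
      if h: "\<sigma> permutes {1..n-1}" "\<sigma> n = n"
    proof -
      have cn: "cycle_of \<sigma> n = {n}"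
      proof -
        have "(\<sigma> ^^ k) n = n" for k by (induction k) (use h in auto)
        then show ?thesis unfolding cycle_of_def by auto
      qed
      have cyc: "cycles n \<sigma> = insert {n} (cycles (n-1) \<sigma>)"
        unfolding cycles_def U using cn by simp
      have notin: "{n} \<notin> cycles (n-1) \<sigma>"
      proof
        assume "{n} \<in> cycles (n-1) \<sigma>"
        then obtain x where x: "x \<in> {1..n-1}" "cycle_of \<sigma> x = {n}" unfolding cycles_def by auto
        then have "x = n" using cycle_of_self[of x \<sigma>] by auto
        then show False using x by auto
      qed
      have fin: "finite (cycles (n-1) \<sigma>)" unfolding cycles_def by simp
      have e1: "{y \<in> {n}. \<sigma> y < y} = {}" and e2: "{y \<in> {n}. y < \<sigma> y} = {}" using h(2) by auto
      have "cdes \<sigma> {n} = 0" unfolding cdes_def e1 by simp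
      then have w0: "min (cdes \<sigma> {n}) (casc \<sigma> {n}) = 0" by simp
      show ?thesis unfolding odd_order_def cyclic_weight_def cyc
        using notin fin w0 by (simp add: sum.insert)
    qed
    show ?thesis using perm rest by metis
  qed
  show ?thesis unfolding odd_perms_def using key by blast
qed

lemma finite_odd_perms: "finite (odd_perms n d)"
proof -
  have "odd_perms n d \<subseteq> {\<sigma>. \<sigma> permutes {1..n}}" unfolding odd_perms_def by blast
  then show ?thesis using finite_permutations[of "{1..n}"] finite_subset by blast
qed

lemma two_cycle_even:
  assumes P: "\<sigma> permutes {1..n}" and "1 \<le> n" and sj: "\<sigma> j = n" and sn: "\<sigma> n = j" and jn: "j \<noteq> n"
  shows "\<not> odd_order n \<sigma>"
proof -
  have "(\<sigma> ^^ k) n \<in> {n, j}" for k by (induction k) (use sj sn in auto)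
  moreover have "(\<sigma> ^^ 0) n = n" "(\<sigma> ^^ 1) n = j" using sn by auto
  ultimately have "cycle_of \<sigma> n = {n, j}" unfolding cycle_of_def by (auto, metis, metis)
  moreover have "cycle_of \<sigma> n \<in> cycles n \<sigma>" unfolding cycles_def using assms(2) by auto
  ultimately show ?thesis unfolding odd_order_def using jn by force
qed

lemma p_rec:
  assumes n2: "2 \<le> n"
  shows "p n d = p (n - 1) d + (\<Sum>i\<in>{1..n-1}. \<Sum>j\<in>{1..n-1} - {i}. p_factor n d i j)"
proof -
  let ?I = "Sigma {1..n-1} (\<lambda>i. {1..n-1} - {i})"
  define F where "F = (\<lambda>x. {\<sigma> \<in> odd_perms n d. \<sigma> (fst x) = n \<and> \<sigma> n = snd x})"
  let ?A = "{\<sigma> \<in> odd_perms n d. \<sigma> n = n}"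
  have split: "odd_perms n d = ?A \<union> (\<Union>x\<in>?I. F x)"
  proof (rule set_eqI, rule iffI)
    fix \<sigma> assume s: "\<sigma> \<in> odd_perms n d"
    then have P: "\<sigma> permutes {1..n}" and O: "odd_order n \<sigma>" unfolding odd_perms_def by auto
    show "\<sigma> \<in> ?A \<union> (\<Union>x\<in>?I. F x)"
    proof (cases "\<sigma> n = n")
      case True then show ?thesis using s by blast
    next
      case False
      define i where "i = inv \<sigma> n"
      define j where "j = \<sigma> n"
      have si: "\<sigma> i = n" unfolding i_def using permutes_inverses(1)[OF P] by simp
      have iS: "i \<in> {1..n}" unfolding i_def using permutes_in_image[OF permutes_inv[OF P]] n2 by auto
      have jS: "j \<in> {1..n}" unfolding j_def using permutes_in_image[OF P] n2 by auto
      have in': "i \<noteq> n" using si False by auto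
      have jn: "j \<noteq> n" using False unfolding j_def by simp
      have ij: "i \<noteq> j"
      proof
        assume "i = j"
        then have "\<sigma> j = n" using si by simp
        then show False using two_cycle_even[OF P _ _ _ jn] O n2 unfolding j_def by auto
      qed
      have "(i, j) \<in> ?I" using iS jS in' jn ij by auto
      moreover have "\<sigma> \<in> F (i, j)" using s si unfolding F_def j_def by simp
      ultimately show ?thesis by blast
    qed
  next
    fix \<sigma> assume "\<sigma> \<in> ?A \<union> (\<Union>x\<in>?I. F x)"
    then show "\<sigma> \<in> odd_perms n d" unfolding F_def by blast
  qed
  have disj1: "?A \<inter> F x = {}" if "x \<in> ?I" for x
    using that unfolding F_def by auto
  have disj2: "F x \<inter> F y = {}" if "x \<in> ?I" "y \<in> ?I" "x \<noteq> y" for x y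
  proof (rule ccontr)
    assume "F x \<inter> F y \<noteq> {}"
    then obtain \<sigma> where s: "\<sigma> \<in> F x" "\<sigma> \<in> F y" by blast
    then have P: "\<sigma> permutes {1..n}" unfolding F_def odd_perms_def by auto
    have "\<sigma> (fst x) = \<sigma> (fst y)" "snd x = snd y" using s unfolding F_def by auto
    then have "fst x = fst y" "snd x = snd y" using permutes_inj[OF P] by (auto simp: inj_eq)
    then show False using that(3) by (simp add: prod_eq_iff)
  qed
  have "p n d = card ?A + (\<Sum>x\<in>?I. card (F x))"
    unfolding p_def by (rule card_partition[OF finite_odd_perms split _ disj1 disj2]) auto
  also have "card ?A = p (n - 1) d" unfolding p_def odd_perms_fix[OF n2] ..
  also have "(\<Sum>x\<in>?I. card (F x)) = (\<Sum>i\<in>{1..n-1}. \<Sum>j\<in>{1..n-1} - {i}. p_factor n d i j)"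
    unfolding F_def p_factor_def using sum_pairs[where m="n-1" and f="\<lambda>i j. card {\<sigma> \<in> odd_perms n d. \<sigma> i = n \<and> \<sigma> n = j}"]
    by simp
  finally show ?thesis .
qed

definition stp :: "nat \<Rightarrow> nat \<Rightarrow> int" where
  "stp x y = (if x < y then 1 else if y < x then -1 else 0)"

fun hgt :: "nat list \<Rightarrow> int" where
  "hgt (x # y # zs) = stp x y + hgt (y # zs)"
| "hgt _ = 0"

fun dsc :: "nat list \<Rightarrow> nat" where
  "dsc (x # y # zs) = (if y < x then 1 else 0) + dsc (y # zs)"
| "dsc _ = 0"

fun asc2 :: "nat list \<Rightarrow> nat" where
  "asc2 (x # y # zs) = (if x < y then 1 else 0) + asc2 (y # zs)"
| "asc2 _ = 0"

lemma card_steps_Cons2: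
  fixes P :: "nat \<Rightarrow> nat \<Rightarrow> bool"
  shows "card {t. Suc t < length (x # y # zs) \<and> P ((x # y # zs) ! t) ((x # y # zs) ! Suc t)}
       = (if P x y then 1 else 0) + card {t. Suc t < length (y # zs) \<and> P ((y # zs) ! t) ((y # zs) ! Suc t)}"
proof -
  let ?A = "{t. Suc t < length (y # zs) \<and> P ((y # zs) ! t) ((y # zs) ! Suc t)}"
  have fin: "finite ?A" by (rule finite_subset[of _ "{..<length (y#zs)}"]) auto
  have eq: "{t. Suc t < length (x # y # zs) \<and> P ((x # y # zs) ! t) ((x # y # zs) ! Suc t)}
          = (if P x y then {0} else {}) \<union> Suc ` ?A"
    apply (rule set_eqI)
    subgoal for t by (cases t) auto
    done
  have "0 \<notin> Suc ` ?A" by auto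
  then show ?thesis unfolding eq using fin by (auto simp: card_image)
qed

lemma card_steps_short:
  "length w < 2 \<Longrightarrow> card {t. Suc t < length w \<and> P (w ! t) (w ! Suc t)} = 0"
  by (auto)

lemma des_dsc: "des w = dsc w"
proof (induction w rule: dsc.induct)
  case (1 x y zs)
  then show ?case unfolding des_def using card_steps_Cons2[of x y zs "\<lambda>a b. a > b"] by simp
next
  case ("2_1") then show ?case by (simp add: des_def)
next
  case ("2_2" v) then show ?case by (simp add: des_def)
qed

lemma asc_asc2: "asc w = asc2 w"
proof (induction w rule: asc2.induct)
  case (1 x y zs)
  then show ?case unfolding asc_def using card_steps_Cons2[of x y zs "\<lambda>a b. a < b"] by simp
next
  case ("2_1") then show ?case by (simp add: asc_def)
next
  case ("2_2" v) then show ?case by (simp add: asc_def)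
qed

lemma height_hgt: "height w = hgt w"
  unfolding height_def asc_asc2 des_dsc
  by (induction w rule: hgt.induct) (auto simp: stp_def)

definition geq :: "int \<Rightarrow> nat list \<Rightarrow> bool" where
  "geq c w \<longleftrightarrow> (\<forall>k \<le> length w. c \<le> hgt (take k w))"

lemma ballot_geq: "ballot w \<longleftrightarrow> geq 0 w"
  by (simp add: ballot_def geq_def height_hgt)

lemma hgt_append:
  "xs \<noteq> [] \<Longrightarrow> ys \<noteq> [] \<Longrightarrow> hgt (xs @ ys) = hgt xs + stp (last xs) (hd ys) + hgt ys"
proof (induction xs rule: hgt.induct)
  case (1 x y zs) then show ?case by simp
next
  case ("2_1") then show ?case by simp
next
  case ("2_2" v) then show ?case by (cases ys) auto
qed

lemma dsc_append:
  "xs \<noteq> [] \<Longrightarrow> ys \<noteq> [] \<Longrightarrow> dsc (xs @ ys) = dsc xs + (if hd ys < last xs then 1 else 0) + dsc ys"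
proof (induction xs rule: dsc.induct)
  case (1 x y zs) then show ?case by simp
next
  case ("2_1") then show ?case by simp
next
  case ("2_2" v) then show ?case by (cases ys) auto
qed

lemma hgt_single[simp]: "hgt [x] = 0" by simp
lemma dsc_single[simp]: "dsc [x] = 0" by simp

lemma geq_le0: "geq c w \<Longrightarrow> c \<le> 0"
proof -
  assume "geq c w"
  then have "c \<le> hgt (take 0 w)" unfolding geq_def by blast
  then show ?thesis by simp
qed

lemma hgt_take_le1: "k \<le> 1 \<Longrightarrow> hgt (take k w) = 0"
proof -
  assume "k \<le> 1"
  then have "k = 0 \<or> k = 1" by auto
  then show ?thesis by (cases w) auto
qed

lemma geq_Nil[simp]: "geq c [] \<longleftrightarrow> c \<le> 0"
  unfolding geq_def by simp

lemma geq_single[simp]: "geq c [x] \<longleftrightarrow> c \<le> 0"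
  unfolding geq_def using hgt_take_le1 by (simp add: exI[of _ 0])

lemma geq_hgt: "geq c w \<Longrightarrow> c \<le> hgt w"
proof -
  assume "geq c w"
  then have "c \<le> hgt (take (length w) w)" unfolding geq_def by blast
  then show ?thesis by simp
qed

lemma geq_take: "geq c w \<Longrightarrow> geq c (take k w)"
  unfolding geq_def by (simp add: min_def)

lemma geq_mono: "geq c w \<Longrightarrow> c' \<le> c \<Longrightarrow> geq c' w"
  unfolding geq_def by (meson order_trans)

lemma geq_append:
  assumes "xs \<noteq> []" "ys \<noteq> []"
  shows "geq c (xs @ ys) \<longleftrightarrow> geq c xs \<and> geq (c - hgt xs - stp (last xs) (hd ys)) ys"
proof
  assume H: "geq c (xs @ ys)"
  have A: "geq c xs" using geq_take[OF H, of "length xs"] by simp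
  have "c - hgt xs - stp (last xs) (hd ys) \<le> hgt (take k ys)" if "k \<le> length ys" for k
  proof (cases "k = 0")
    case True
    have "Suc (length xs) \<le> length (xs @ ys)" using assms(2) by (cases ys) auto
    then have "c \<le> hgt (take (Suc (length xs)) (xs @ ys))" using H unfolding geq_def by blast
    also have "take (Suc (length xs)) (xs @ ys) = xs @ [hd ys]" using assms
      by (cases ys) auto
    finally show ?thesis using True assms by (simp add: hgt_append)
  next
    case False
    have "length xs + k \<le> length (xs @ ys)" using that by simp
    then have "c \<le> hgt (take (length xs + k) (xs @ ys))" using H unfolding geq_def by blast
    also have "take (length xs + k) (xs @ ys) = xs @ take k ys" by simp
    finally show ?thesis using False assms that
      by (subst (asm) hgt_append) (auto simp: hd_take)
  qed
  then show "geq c xs \<and> geq (c - hgt xs - stp (last xs) (hd ys)) ys" using A unfolding geq_def by blast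
next
  assume H: "geq c xs \<and> geq (c - hgt xs - stp (last xs) (hd ys)) ys"
  show "geq c (xs @ ys)" unfolding geq_def
  proof (intro allI impI)
    fix k assume k: "k \<le> length (xs @ ys)"
    show "c \<le> hgt (take k (xs @ ys))"
    proof (cases "k \<le> length xs")
      case True then show ?thesis using H unfolding geq_def by simp
    next
      case False
      define l where "l = k - length xs"
      have l: "k = length xs + l" "l > 0" "l \<le> length ys" using k False unfolding l_def by auto
      have "take k (xs @ ys) = xs @ take l ys" using l by simp
      moreover have "c - hgt xs - stp (last xs) (hd ys) \<le> hgt (take l ys)" using H l unfolding geq_def by simp
      ultimately show ?thesis using l assms by (simp add: hgt_append hd_take)
    qed
  qed
qed

lemma split_unique:
  assumes "u @ x # v = u' @ x # v'" "x \<notin> set u" "x \<notin> set u'"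
  shows "u = u'" "v = v'"
proof -
  have t: "takeWhile (\<lambda>y. y \<noteq> x) (u @ x # v) = u" using assms(2) by (subst takeWhile_append2) auto
  have t': "takeWhile (\<lambda>y. y \<noteq> x) (u' @ x # v') = u'" using assms(3) by (subst takeWhile_append2) auto
  show "u = u'" using t t' assms(1) by simp
  then show "v = v'" using assms(1) by simp
qed

lemma fac_iff:
  "(\<exists>t. t + 2 < length w \<and> w ! t = a \<and> w ! (t+1) = y \<and> w ! (t+2) = c) \<longleftrightarrow> sublist [a, y, c] w"
proof
  assume "\<exists>t. t + 2 < length w \<and> w ! t = a \<and> w ! (t+1) = y \<and> w ! (t+2) = c"
  then obtain t where t: "t + 2 < length w" "w ! t = a" "w ! (t+1) = y" "w ! (t+2) = c" by blast
  have l: "t < length w" "Suc t < length w" "Suc (Suc t) < length w" using t(1) by auto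
  have "drop t w = w ! t # drop (Suc t) w" using l(1) by (simp add: Cons_nth_drop_Suc)
  also have "drop (Suc t) w = w ! Suc t # drop (Suc (Suc t)) w" using l(2) by (simp add: Cons_nth_drop_Suc)
  also have "drop (Suc (Suc t)) w = w ! Suc (Suc t) # drop (Suc (Suc (Suc t))) w" using l(3) by (simp add: Cons_nth_drop_Suc)
  finally have dr: "drop t w = [a, y, c] @ drop (Suc (Suc (Suc t))) w" using t(2,3,4) by simp
  have "w = take t w @ drop t w" by simp
  then have "w = take t w @ [a, y, c] @ drop (Suc (Suc (Suc t))) w" using dr by simp
  then show "sublist [a, y, c] w" unfolding sublist_def by blast
next
  assume "sublist [a, y, c] w"
  then obtain ps ss where w: "w = ps @ [a, y, c] @ ss" unfolding sublist_def by blast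
  show "\<exists>t. t + 2 < length w \<and> w ! t = a \<and> w ! (t+1) = y \<and> w ! (t+2) = c"
    by (rule exI[of _ "length ps"]) (simp add: w nth_append)
qed

lemma b_factor_alt: "b_factor n d i j = card {w \<in> ballot_perms n d. sublist [i, n, j] w}"
  unfolding b_factor_def fac_iff ..

lemma not_geq0_down: "y < x \<Longrightarrow> \<not> geq 0 (x # y # zs)"
proof
  assume "y < x" "geq 0 (x # y # zs)"
  then have "0 \<le> hgt (take 2 (x # y # zs))" unfolding geq_def by force
  then show False using \<open>y < x\<close> by (simp add: stp_def)
qed

lemma atLeast_minus_top: "{1..n} - {n} = {1..n - 1::nat}"
proof (rule set_eqI)
  fix x show "x \<in> {1..n} - {n} \<longleftrightarrow> x \<in> {1..n - 1}" by (cases n) auto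
qed

lemma perm_mem: "w \<in> permutations_of_set S \<Longrightarrow> set w = S \<and> distinct w"
  unfolding permutations_of_set_def by simp

lemma last_n_bij:
  assumes n2: "2 \<le> n"
  shows "(\<lambda>v. v @ [n]) ` ballot_perms (n - 1) d = {w \<in> ballot_perms n d. last w = n}"
proof (rule set_eqI, rule iffI)
  fix w assume "w \<in> (\<lambda>v. v @ [n]) ` ballot_perms (n - 1) d"
  then obtain v where v: "v \<in> ballot_perms (n - 1) d" "w = v @ [n]" by blast
  have sv: "set v = {1..n-1}" "distinct v" "ballot v" "des v = d"
    using v(1) unfolding ballot_perms_def permutations_of_set_def by auto
  have vne: "v \<noteq> []" using sv(1) n2 by auto
  have lv: "last v < n" using sv(1) vne last_in_set[OF vne] n2 by auto
  have "set w = {1..n}" using sv(1) v(2) n2 by auto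
  moreover have "distinct w" using sv v(2) by auto
  moreover have "des w = d" using sv(4) v(2) vne lv unfolding des_dsc by (simp add: dsc_append)
  moreover have "ballot w"
  proof -
    have "0 \<le> hgt v" using geq_hgt sv(3) ballot_geq by blast
    then show ?thesis using sv(3) vne v(2) lv unfolding ballot_geq by (simp add: geq_append stp_def)
  qed
  ultimately show "w \<in> {w \<in> ballot_perms n d. last w = n}" using v(2)
    unfolding ballot_perms_def permutations_of_set_def by auto
next
  fix w assume w: "w \<in> {w \<in> ballot_perms n d. last w = n}"
  have sw: "set w = {1..n}" "distinct w" "ballot w" "des w = d" "last w = n"
    using w unfolding ballot_perms_def permutations_of_set_def by auto
  have wne: "w \<noteq> []" using sw(1) n2 by auto
  define v where "v = butlast w"
  have wv: "w = v @ [n]" unfolding v_def using append_butlast_last_id[OF wne] sw(5) by simp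
  have vne: "v \<noteq> []"
  proof
    assume "v = []"
    then have "set w = {n}" using wv by simp
    moreover have "1 \<in> set w" using sw(1) n2 by simp
    ultimately show False using n2 by simp
  qed
  have nv: "n \<notin> set v" using sw(2) wv by auto
  have "set v = set w - {n}" using wv nv by auto
  also have "\<dots> = {1..n-1}" using sw(1) atLeast_minus_top by simp
  finally have "set v = {1..n-1}" .
  moreover have "distinct v" using sw(2) wv by auto
  moreover have lv: "last v < n" using \<open>set v = {1..n-1}\<close> last_in_set[OF vne] n2 by auto
  moreover have "des v = d" using sw(4) wv vne lv unfolding des_dsc by (simp add: dsc_append)
  moreover have "ballot v" using sw(3) wv vne unfolding ballot_geq by (simp add: geq_append)
  ultimately have "v \<in> ballot_perms (n - 1) d" unfolding ballot_perms_def permutations_of_set_def by simp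
  then show "w \<in> (\<lambda>v. v @ [n]) ` ballot_perms (n - 1) d" using wv by blast
qed

lemma finite_ballot_perms: "finite (ballot_perms n d)"
proof -
  have "ballot_perms n d \<subseteq> permutations_of_set {1..n}" unfolding ballot_perms_def by blast
  then show ?thesis using finite_permutations_of_set finite_subset by blast
qed

lemma b_rec:
  assumes n2: "2 \<le> n"
  shows "b n d = b (n - 1) d + (\<Sum>i\<in>{1..n-1}. \<Sum>j\<in>{1..n-1} - {i}. b_factor n d i j)"
proof -
  let ?I = "Sigma {1..n-1} (\<lambda>i. {1..n-1} - {i})"
  define F where "F = (\<lambda>x. {w \<in> ballot_perms n d. sublist [fst x, n, snd x] w})"
  let ?A = "{w \<in> ballot_perms n d. last w = n}"
  have split: "ballot_perms n d = ?A \<union> (\<Union>x\<in>?I. F x)"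
  proof (rule set_eqI, rule iffI)
    fix w assume wB: "w \<in> ballot_perms n d"
    then have sw: "set w = {1..n}" "distinct w" "ballot w"
      unfolding ballot_perms_def permutations_of_set_def by auto
    show "w \<in> ?A \<union> (\<Union>x\<in>?I. F x)"
    proof (cases "last w = n")
      case True then show ?thesis using wB by blast
    next
      case False
      have "n \<in> set w" using sw(1) n2 by auto
      then obtain a c where w: "w = a @ n # c" using split_list by metis
      have cne: "c \<noteq> []" using False w by auto
      have hc: "hd c \<in> {1..n}" "hd c \<noteq> n" using sw w cne by (auto simp: hd_in_set)
      have ane: "a \<noteq> []"
      proof
        assume "a = []"
        then have "w = n # hd c # tl c" using w cne by simp
        moreover have "hd c < n" using hc by auto
        ultimately show False using sw(3) not_geq0_down unfolding ballot_geq by metis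
      qed
      have la: "last a \<in> {1..n}" "last a \<noteq> n" using sw w ane by (auto simp: last_in_set)
      have dj: "set a \<inter> set c = {}" using sw(2) w by auto
      have ij: "last a \<noteq> hd c" using dj last_in_set[OF ane] hd_in_set[OF cne] by auto
      have "w = butlast a @ [last a, n, hd c] @ tl c" using w ane cne by simp
      then have "sublist [last a, n, hd c] w" unfolding sublist_def by blast
      moreover have "(last a, hd c) \<in> ?I" using la hc ij by auto
      ultimately show ?thesis using wB unfolding F_def by force
    qed
  next
    fix w assume "w \<in> ?A \<union> (\<Union>x\<in>?I. F x)"
    then show "w \<in> ballot_perms n d" unfolding F_def by blast
  qed
  have disj1: "?A \<inter> F x = {}" if "x \<in> ?I" for x
  proof (rule ccontr)
    assume "?A \<inter> F x \<noteq> {}"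
    then obtain w where w: "w \<in> ?A" "w \<in> F x" by blast
    then have dw: "distinct w" unfolding ballot_perms_def permutations_of_set_def by auto
    obtain ps ss where ws: "w = ps @ [fst x, n, snd x] @ ss" using w(2) unfolding F_def sublist_def by blast
    have "last w \<in> set (snd x # ss)" using ws by (simp add: last_in_set)
    moreover have "n \<notin> set (snd x # ss)" using dw ws by auto
    ultimately show False using w(1) by auto
  qed
  have disj2: "F x \<inter> F y = {}" if "x \<in> ?I" "y \<in> ?I" "x \<noteq> y" for x y
  proof (rule ccontr)
    assume "F x \<inter> F y \<noteq> {}"
    then obtain w where w: "w \<in> F x" "w \<in> F y" by blast
    then have dw: "distinct w" unfolding F_def ballot_perms_def permutations_of_set_def by auto
    obtain ps ss where ws: "w = ps @ [fst x, n, snd x] @ ss" using w(1) unfolding F_def sublist_def by blast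
    obtain ps' ss' where ws': "w = ps' @ [fst y, n, snd y] @ ss'" using w(2) unfolding F_def sublist_def by blast
    have e: "(ps @ [fst x]) @ n # (snd x # ss) = (ps' @ [fst y]) @ n # (snd y # ss')" using ws ws' by simp
    have d1: "distinct (ps @ [fst x, n, snd x] @ ss)" using dw ws by simp
    have d2: "distinct (ps' @ [fst y, n, snd y] @ ss')" using dw ws' by simp
    have "n \<notin> set (ps @ [fst x])" using d1 by auto
    moreover have "n \<notin> set (ps' @ [fst y])" using d2 by auto
    ultimately have "ps @ [fst x] = ps' @ [fst y]" "snd x # ss = snd y # ss'" using split_unique[OF e] by auto
    then have "fst x = fst y" "snd x = snd y" by auto
    then show False using that(3) by (simp add: prod_eq_iff)
  qed
  have "b n d = card ?A + (\<Sum>x\<in>?I. card (F x))"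
    unfolding b_def by (rule card_partition[OF finite_ballot_perms split _ disj1 disj2]) auto
  also have "card ?A = b (n - 1) d"
  proof -
    have "inj_on (\<lambda>v. v @ [n]) (ballot_perms (n - 1) d)" by (rule inj_onI) simp
    then have "card ((\<lambda>v. v @ [n]) ` ballot_perms (n - 1) d) = card (ballot_perms (n - 1) d)" by (rule card_image)
    then show ?thesis unfolding b_def last_n_bij[OF n2] by simp
  qed
  also have "(\<Sum>x\<in>?I. card (F x)) = (\<Sum>i\<in>{1..n-1}. \<Sum>j\<in>{1..n-1} - {i}. b_factor n d i j)"
    unfolding F_def b_factor_alt using sum_pairs[where m="n-1" and f="\<lambda>i j. card {w \<in> ballot_perms n d. sublist [i, n, j] w}"]
    by simp
  finally show ?thesis .
qed

lemma stp_range: "-1 \<le> stp x y" "stp x y \<le> 1"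
  unfolding stp_def by auto

lemma stp_down: "y < x \<Longrightarrow> stp x y = -1" unfolding stp_def by auto
lemma stp_up: "x < y \<Longrightarrow> stp x y = 1" unfolding stp_def by auto

lemma hgt_snoc: "u \<noteq> [] \<Longrightarrow> hgt (u @ [x]) = hgt u + stp (last u) x"
  using hgt_append[of u "[x]"] by simp

lemma take_append_hd:
  assumes "k < length c"
  shows "take (Suc k) c = take k c @ [c ! k]"
  using assms by (simp add: take_Suc_conv_app_nth)

lemma first_neg_split:
  assumes g1: "geq (-1) c" and g0: "\<not> geq 0 c"
  shows "\<exists>u v. c = u @ v \<and> u \<noteq> [] \<and> v \<noteq> [] \<and> geq 0 u \<and> hgt u = 0 \<and> stp (last u) (hd v) = -1 \<and> geq 0 v"
proof -
  define K where "K = {k. k \<le> length c \<and> hgt (take k c) < 0}"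
  have "K \<noteq> {}" using g0 unfolding K_def geq_def by force
  define k where "k = Least (\<lambda>k. k \<in> K)"
  have kK: "k \<in> K" unfolding k_def using \<open>K \<noteq> {}\<close> by (metis LeastI ex_in_conv)
  have kmin: "\<And>l. l < k \<Longrightarrow> l \<notin> K" unfolding k_def using not_less_Least by blast
  have kl: "k \<le> length c" and hk: "hgt (take k c) < 0" using kK unfolding K_def by auto
  have k2: "2 \<le> k"
  proof (rule ccontr)
    assume "\<not> 2 \<le> k"
    then have "k \<le> 1" by simp
    then show False using hgt_take_le1[of k c] hk by simp
  qed
  define u where "u = take (k - 1) c"
  define v where "v = drop (k - 1) c"
  have c: "c = u @ v" unfolding u_def v_def by simp
  have lu: "length u = k - 1" unfolding u_def using kl by simp
  have une: "u \<noteq> []" using lu k2 by auto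
  have vne: "v \<noteq> []" unfolding v_def using kl k2 by simp
  have hdv: "hd v = c ! (k - 1)" unfolding v_def using kl k2 by (simp add: hd_drop_conv_nth)
  have tk: "take k c = u @ [hd v]" unfolding u_def hdv using take_append_hd[of "k-1" c] kl k2
    by (metis Suc_diff_1 Suc_le_lessD less_le_trans order_less_le_trans numeral_2_eq_2 zero_less_Suc)
  have gu: "geq 0 u" unfolding geq_def
  proof (intro allI impI)
    fix l assume "l \<le> length u"
    then have "l < k" "l \<le> length c" using lu kl k2 by auto
    then have "l \<notin> K" using kmin by blast
    moreover have "take l u = take l c" unfolding u_def using \<open>l \<le> length u\<close> lu by (simp add: min_def)
    ultimately show "0 \<le> hgt (take l u)" using \<open>l \<le> length c\<close> unfolding K_def by auto
  qed
  have hu0: "0 \<le> hgt u" using geq_hgt[OF gu] .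
  have "-1 \<le> hgt (take k c)" using g1 kl unfolding geq_def by blast
  then have e: "hgt u + stp (last u) (hd v) = -1" using hk tk hgt_snoc[OF une] by simp
  then have s: "stp (last u) (hd v) = -1" and h: "hgt u = 0" using hu0 stp_range[of "last u" "hd v"] by auto
  have "geq (-1 - hgt u - stp (last u) (hd v)) v" using g1 c geq_append[OF une vne] by simp
  then have gv: "geq 0 v" using s h by simp
  show ?thesis using c une vne gu h s gv by blast
qed

lemma split_cases:
  assumes "u1 @ v1 = u2 @ v2"
  shows "u1 = u2 \<or> (\<exists>us. us \<noteq> [] \<and> u2 = u1 @ us \<and> v1 = us @ v2) \<or> (\<exists>us. us \<noteq> [] \<and> u1 = u2 @ us \<and> v2 = us @ v1)"
  using assms by (auto simp: append_eq_append_conv2)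

lemma first_neg_unique_aux:
  assumes "u2 = u1 @ us" "us \<noteq> []" "v1 = us @ v2" "u1 \<noteq> []" "hgt u1 = 0" "stp (last u1) (hd v1) = -1" "geq 0 u2"
  shows False
proof -
  have "geq 0 (u1 @ us)" using assms by simp
  then have "geq (0 - hgt u1 - stp (last u1) (hd us)) us" using geq_append assms(2,4) by blast
  moreover have "hd us = hd v1" using assms(2,3) by simp
  ultimately have "geq 1 us" using assms(5,6) by simp
  then show False using geq_le0 by fastforce
qed

lemma first_neg_unique:
  assumes "u1 @ v1 = u2 @ v2"
    "u1 \<noteq> []" "geq 0 u1" "hgt u1 = 0" "stp (last u1) (hd v1) = -1"
    "u2 \<noteq> []" "geq 0 u2" "hgt u2 = 0" "stp (last u2) (hd v2) = -1"
  shows "u1 = u2"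
  using split_cases[OF assms(1)] first_neg_unique_aux[of u2 u1 _ v1 v2] first_neg_unique_aux[of u1 u2 _ v2 v1] assms
  by blast

lemma last_zero_split:
  assumes g0: "geq 0 c" and h1: "1 \<le> hgt c"
  shows "\<exists>u v. c = u @ v \<and> u \<noteq> [] \<and> v \<noteq> [] \<and> geq 0 u \<and> hgt u = 0 \<and> stp (last u) (hd v) = 1 \<and> geq 0 v"
proof -
  define K where "K = {k. 1 \<le> k \<and> k \<le> length c \<and> hgt (take k c) = 0}"
  have cne: "2 \<le> length c"
  proof (rule ccontr)
    assume "\<not> 2 \<le> length c"
    then have "length c \<le> 1" by simp
    then have "hgt (take (length c) c) = 0" using hgt_take_le1 by blast
    then show False using h1 by simp
  qed
  have "1 \<in> K" unfolding K_def using cne hgt_take_le1[of 1 c] by auto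
  have finK: "finite K" unfolding K_def by auto
  define k where "k = Max K"
  have kK: "k \<in> K" unfolding k_def using finK \<open>1 \<in> K\<close> Max_in by blast
  have kmax: "\<And>l. l \<in> K \<Longrightarrow> l \<le> k" unfolding k_def using finK by simp
  have k1: "1 \<le> k" and kl: "k \<le> length c" and hk: "hgt (take k c) = 0" using kK unfolding K_def by auto
  have kl': "k < length c"
  proof (rule ccontr)
    assume "\<not> k < length c"
    then have "k = length c" using kl by simp
    then show False using hk h1 by simp
  qed
  define u where "u = take k c"
  define v where "v = drop k c"
  have c: "c = u @ v" unfolding u_def v_def by simp
  have lu: "length u = k" unfolding u_def using kl by simp
  have une: "u \<noteq> []" using lu k1 by auto
  have vne: "v \<noteq> []" unfolding v_def using kl' by simp
  have hu: "hgt u = 0" using hk unfolding u_def .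
  have gu: "geq 0 u" unfolding u_def using geq_take[OF g0] .
  have hdv: "hd v = c ! k" unfolding v_def using kl' by (simp add: hd_drop_conv_nth)
  have tk: "take (Suc k) c = u @ [hd v]" unfolding u_def hdv using take_append_hd[OF kl'] .
  have "0 \<le> hgt (take (Suc k) c)" using g0 kl' unfolding geq_def by simp
  then have s0: "0 \<le> stp (last u) (hd v)" using tk hgt_snoc[OF une] hu by simp
  have "Suc k \<notin> K" using kmax by fastforce
  then have "hgt (take (Suc k) c) \<noteq> 0" unfolding K_def using kl' by simp
  then have "stp (last u) (hd v) \<noteq> 0" using tk hgt_snoc[OF une] hu by simp
  then have s: "stp (last u) (hd v) = 1" using s0 stp_range[of "last u" "hd v"] by simp
  have gv1: "geq (-1) v" using g0 c geq_append[OF une vne] hu s by simp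
  have gv: "geq 0 v" unfolding geq_def
  proof (intro allI impI)
    fix l assume ll: "l \<le> length v"
    show "0 \<le> hgt (take l v)"
    proof (cases "l = 0")
      case True then show ?thesis by simp
    next
      case False
      have m1: "-1 \<le> hgt (take l v)" using gv1 ll unfolding geq_def by blast
      have tne: "take l v \<noteq> []" using False vne by simp
      have "take (k + l) c = u @ take l v" unfolding c using lu by simp
      then have hkl: "hgt (take (k + l) c) = 1 + hgt (take l v)"
        using hgt_append[OF une tne] hu s tne vne by (simp add: hd_take)
      show ?thesis
      proof (rule ccontr)
        assume "\<not> 0 \<le> hgt (take l v)"
        then have "hgt (take l v) = -1" using m1 by simp
        then have "k + l \<in> K" unfolding K_def using hkl k1 ll c lu by simp
        then show False using kmax False by fastforce
      qed
    qed
  qed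
  show ?thesis using c une vne gu hu s gv by blast
qed

lemma last_zero_unique_aux:
  assumes "u2 = u1 @ us" "us \<noteq> []" "v1 = us @ v2" "u1 \<noteq> []" "hgt u1 = 0" "stp (last u1) (hd v1) = 1"
    "hgt u2 = 0" "geq 0 v1"
  shows False
proof -
  have "hgt u2 = hgt u1 + stp (last u1) (hd us) + hgt us" using hgt_append[OF assms(4,2)] assms(1) by simp
  moreover have "hd us = hd v1" using assms(2,3) by simp
  ultimately have "hgt us = -1" using assms(5,6,7) by simp
  moreover have "geq 0 us" using geq_take[OF assms(8), of "length us"] assms(3) by simp
  ultimately show False using geq_hgt by fastforce
qed

lemma last_zero_unique:
  assumes "u1 @ v1 = u2 @ v2"
    "u1 \<noteq> []" "hgt u1 = 0" "stp (last u1) (hd v1) = 1" "geq 0 v1"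
    "u2 \<noteq> []" "hgt u2 = 0" "stp (last u2) (hd v2) = 1" "geq 0 v2"
  shows "u1 = u2"
  using split_cases[OF assms(1)] last_zero_unique_aux[of u2 u1 _ v1 v2] last_zero_unique_aux[of u1 u2 _ v2 v1] assms
  by blast

lemma sublist3_append:
  assumes "sublist [x, y, z] (u @ v)"
  shows "sublist [x, y, z] u \<or> sublist [x, y, z] v \<or> (\<exists>u0 v0. u = u0 @ [x] \<and> v = y # z # v0)
       \<or> (\<exists>u0 v0. u = u0 @ [x, y] \<and> v = z # v0)"
proof -
  have H: "sublist [x, y, z] u \<or> sublist [x, y, z] v \<or>
        (\<exists>xs1 xs2. [x, y, z] = xs1 @ xs2 \<and> suffix xs1 u \<and> prefix xs2 v)"
    using sublist_append[THEN iffD1, OF assms] .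
  moreover have "sublist [x, y, z] u \<or> sublist [x, y, z] v \<or> (\<exists>u0 v0. u = u0 @ [x] \<and> v = y # z # v0)
       \<or> (\<exists>u0 v0. u = u0 @ [x, y] \<and> v = z # v0)"
    if hh: "[x, y, z] = xs1 @ xs2" "suffix xs1 u" "prefix xs2 v" for xs1 xs2
  proof -
    obtain u0 where u0: "u = u0 @ xs1" using hh(2) unfolding suffix_def by blast
    obtain v0 where v0: "v = xs2 @ v0" using hh(3) unfolding prefix_def by blast
    have e: "xs1 = take (length xs1) [x, y, z]" "xs2 = drop (length xs1) [x, y, z]"
      using hh(1)[symmetric] append_eq_conv_conj by metis+
    have L: "length xs1 \<le> 3" using arg_cong[OF hh(1), of length] by simp
    then have "length xs1 = 0 \<or> length xs1 = 1 \<or> length xs1 = 2 \<or> length xs1 = 3" by linarith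
    then show ?thesis
    proof (elim disjE)
      assume "length xs1 = 0"
      then have "v = [] @ [x, y, z] @ v0" using e v0 by simp
      then show ?thesis unfolding sublist_def by blast
    next
      assume "length xs1 = 1"
      then have "u = u0 @ [x]" "v = y # z # v0" using e u0 v0 by (simp_all add: numeral_eq_Suc)
      then show ?thesis by blast
    next
      assume "length xs1 = 2"
      then have "u = u0 @ [x, y]" "v = z # v0" using e u0 v0 by (simp_all add: numeral_eq_Suc)
      then show ?thesis by blast
    next
      assume "length xs1 = 3"
      then have "u = u0 @ [x, y, z] @ []" using e u0 by (simp add: numeral_eq_Suc)
      then show ?thesis unfolding sublist_def by blast
    qed
  qed
  ultimately show ?thesis by blast
qed

lemma fac_first_neg:
  assumes "sublist [x, y, z] (u @ v)" "u \<noteq> []" "v \<noteq> []" "geq 0 u" "hgt u = 0" "hd v < last u"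
    "x < y" "z < y"
  shows "sublist [x, y, z] u \<or> sublist [x, y, z] v"
proof -
  have no1: False if "u = u0 @ [x]" "v = y # z # v0" for u0 v0 using that assms(6,7) by simp
  have no2: False if "u = u0 @ [x, y]" "v = z # v0" for u0 v0
  proof -
    have "u = (u0 @ [x]) @ [y]" using that by simp
    then have "hgt u = hgt (u0 @ [x]) + stp x y" using hgt_snoc[of "u0 @ [x]" y] by simp
    moreover have "0 \<le> hgt (u0 @ [x])"
    proof -
      have "geq 0 (take (length u0 + 1) u)" using geq_take[OF assms(4)] .
      moreover have "take (length u0 + 1) u = u0 @ [x]" using that by simp
      ultimately show ?thesis using geq_hgt by fastforce
    qed
    ultimately show False using assms(5,7) stp_up by simp
  qed
  show ?thesis using sublist3_append[OF assms(1)] no1 no2 by blast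
qed

lemma fac_last_zero:
  assumes "sublist [x, y, z] (u @ v)" "u \<noteq> []" "v \<noteq> []" "geq 0 v" "last u < hd v"
    "x < y" "z < y"
  shows "sublist [x, y, z] u \<or> sublist [x, y, z] v"
proof -
  have no1: False if "u = u0 @ [x]" "v = y # z # v0" for u0 v0
    using that assms(4,7) not_geq0_down by metis
  have no2: False if "u = u0 @ [x, y]" "v = z # v0" for u0 v0 using that assms(5,7) by simp
  show ?thesis using sublist3_append[OF assms(1)] no1 no2 by blast
qed

lemma fac_pivot:
  assumes "sublist [x, y, z] (u @ q # v)" "q \<noteq> x" "q \<noteq> y" "q \<noteq> z"
  shows "sublist [x, y, z] u \<or> sublist [x, y, z] v"
proof -
  have A: "sublist [x, y, z] u \<or> sublist [x, y, z] ([q] @ v)" using sublist3_append[OF assms(1)] assms(2-4) by auto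
  have nq: "\<not> sublist [x, y, z] [q]" unfolding sublist_def by (auto simp: append_eq_Cons_conv)
  have "sublist [x, y, z] ([q] @ v) \<Longrightarrow> sublist [x, y, z] v" using sublist3_append[of x y z "[q]" v] assms(2-4) nq by auto
  then show ?thesis using A by blast
qed

lemma sublist_app_l: "sublist xs u \<Longrightarrow> sublist xs (u @ v)"
  unfolding sublist_def by (metis append.assoc)
lemma sublist_app_r: "sublist xs v \<Longrightarrow> sublist xs (u @ v)"
  unfolding sublist_def by (metis append.assoc)

lemma mono_on_hgt:
  assumes "\<And>a c. a \<in> set w \<Longrightarrow> c \<in> set w \<Longrightarrow> (f a < f c \<longleftrightarrow> a < c)"
  shows "hgt (map f w) = hgt w" "dsc (map f w) = dsc w"
  using assms
proof (induction w rule: hgt.induct)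
  case (1 x y zs)
  { case 1 then show ?case using "1.IH" by (simp add: stp_def) }
  { case 2 then show ?case using "1.IH" by simp }
qed auto

lemma mono_on_geq:
  assumes "\<And>a c. a \<in> set w \<Longrightarrow> c \<in> set w \<Longrightarrow> (f a < f c \<longleftrightarrow> a < c)"
  shows "geq k (map f w) = geq k w"
proof -
  have "hgt (take l (map f w)) = hgt (take l w)" for l
  proof -
    have "\<And>a c. a \<in> set (take l w) \<Longrightarrow> c \<in> set (take l w) \<Longrightarrow> (f a < f c \<longleftrightarrow> a < c)"
      using assms in_set_takeD by metis
    then show ?thesis using mono_on_hgt(1)[of "take l w" f] by (simp add: take_map)
  qed
  then show ?thesis unfolding geq_def by simp
qed

lemma geq_peak_both:
  assumes "u \<noteq> []" "v \<noteq> []" "last u < q" "hd v < q"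
  shows "geq 0 (u @ q # v) \<longleftrightarrow> geq 0 u \<and> geq (- hgt u) v"
proof -
  have "geq 0 (u @ [q] @ v) \<longleftrightarrow> geq 0 u \<and> geq (0 - hgt u - stp (last u) q) ([q] @ v)"
    using geq_append[OF assms(1)] by simp
  also have "geq (0 - hgt u - stp (last u) q) ([q] @ v) \<longleftrightarrow>
      (0 - hgt u - 1 \<le> 0) \<and> geq (0 - hgt u - 1 - 0 - stp q (hd v)) v"
    using geq_append[of "[q]" v] assms stp_up[OF assms(3)] by simp
  finally have "geq 0 (u @ q # v) \<longleftrightarrow> geq 0 u \<and> (- hgt u - 1 \<le> 0) \<and> geq (- hgt u) v"
    using stp_down[OF assms(4)] by simp
  moreover have "geq 0 u \<Longrightarrow> 0 \<le> hgt u" using geq_hgt by fastforce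
  ultimately show ?thesis by auto
qed

lemma geq_peak_last:
  assumes "u \<noteq> []" "last u < q"
  shows "geq 0 (u @ [q]) \<longleftrightarrow> geq 0 u"
proof -
  have "geq 0 (u @ [q]) \<longleftrightarrow> geq 0 u \<and> (0 - hgt u - stp (last u) q \<le> 0)"
    using geq_append[OF assms(1), of "[q]"] by simp
  moreover have "geq 0 u \<Longrightarrow> 0 \<le> hgt u" using geq_hgt by fastforce
  ultimately show ?thesis using stp_up[OF assms(2)] by auto
qed

lemma geq_peak_first:
  assumes "v \<noteq> []" "hd v < q"
  shows "\<not> geq 0 (q # v)"
  using assms not_geq0_down by (cases v) auto

lemma geq_valley_both:
  assumes "u \<noteq> []" "v \<noteq> []" "q < last v" "q < hd u"
  shows "geq 0 (v @ q # u) \<longleftrightarrow> geq 0 v \<and> 1 \<le> hgt v \<and> geq (- hgt v) u"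
proof -
  have "geq 0 (v @ [q] @ u) \<longleftrightarrow> geq 0 v \<and> geq (0 - hgt v - stp (last v) q) ([q] @ u)"
    using geq_append[OF assms(2)] by simp
  also have "geq (0 - hgt v - stp (last v) q) ([q] @ u) \<longleftrightarrow>
      (0 - hgt v + 1 \<le> 0) \<and> geq (0 - hgt v + 1 - 0 - stp q (hd u)) u"
    using geq_append[of "[q]" u] assms stp_down[OF assms(3)] by simp
  finally show ?thesis using stp_up[OF assms(4)] by auto
qed

lemma geq_valley_first:
  assumes "u \<noteq> []" "q < hd u"
  shows "geq 0 (q # u) \<longleftrightarrow> geq (-1) u"
  using geq_append[of "[q]" u] assms stp_up[OF assms(2)] by simp

lemma geq_valley_last:
  assumes "v \<noteq> []" "q < last v"
  shows "geq 0 (v @ [q]) \<longleftrightarrow> geq 0 v \<and> 1 \<le> hgt v"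
  using geq_append[OF assms(1), of "[q]"] stp_down[OF assms(2)] by auto

definition spl :: "nat \<Rightarrow> nat list \<Rightarrow> nat list" where
  "spl q w = takeWhile (\<lambda>x. x \<noteq> q) w"
definition spr :: "nat \<Rightarrow> nat list \<Rightarrow> nat list" where
  "spr q w = tl (dropWhile (\<lambda>x. x \<noteq> q) w)"

lemma spl_spr:
  assumes "q \<in> set w"
  shows "w = spl q w @ q # spr q w" "q \<notin> set (spl q w)"
proof -
  have ne: "dropWhile (\<lambda>x. x \<noteq> q) w \<noteq> []" using assms by (simp add: dropWhile_eq_Nil_conv)
  have h: "hd (dropWhile (\<lambda>x. x \<noteq> q) w) = q" using assms hd_dropWhile[OF ne] by simp
  have "dropWhile (\<lambda>x. x \<noteq> q) w = q # spr q w" unfolding spr_def using ne h by (cases "dropWhile (\<lambda>x. x \<noteq> q) w") auto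
  then show "w = spl q w @ q # spr q w" unfolding spl_def by (metis takeWhile_dropWhile_id)
  show "q \<notin> set (spl q w)" unfolding spl_def by (metis (mono_tags) set_takeWhileD)
qed

lemma spl_spr_eq:
  assumes "w = u @ q # v" "q \<notin> set u"
  shows "spl q w = u" "spr q w = v"
proof -
  have "q \<in> set w" using assms by simp
  then have "u @ q # v = spl q w @ q # spr q w" "q \<notin> set (spl q w)" using spl_spr assms(1) by auto
  then show "spl q w = u" "spr q w = v" using split_unique assms(2) by metis+
qed

lemma dsc_peak:
  assumes "u \<noteq> [] \<Longrightarrow> last u < q" "v \<noteq> [] \<Longrightarrow> hd v < q"
  shows "dsc (u @ q # v) = dsc u + dsc v + (if v = [] then 0 else 1)"
proof -
  have dq: "dsc (q # v) = dsc v + (if v = [] then 0 else 1)"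
  proof (cases "v = []")
    case True then show ?thesis by simp
  next
    case False then show ?thesis using dsc_append[of "[q]" v] assms(2) by simp
  qed
  show ?thesis
  proof (cases "u = []")
    case True then show ?thesis using dq by simp
  next
    case False
    then have "dsc (u @ (q # v)) = dsc u + dsc (q # v)" using dsc_append[of u "q # v"] assms(1) by simp
    then show ?thesis using dq by simp
  qed
qed

lemma dsc_valley:
  assumes "v \<noteq> [] \<Longrightarrow> q < last v" "u \<noteq> [] \<Longrightarrow> q < hd u"
  shows "dsc (v @ q # u) = dsc v + dsc u + (if v = [] then 0 else 1)"
proof -
  have dq: "dsc (q # u) = dsc u"
  proof (cases "u = []")
    case True then show ?thesis by simp
  next
    case False then show ?thesis using dsc_append[of "[q]" u] assms(2) by simp
  qed
  show ?thesis
  proof (cases "v = []")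
    case True then show ?thesis using dq by simp
  next
    case False
    then have "dsc (v @ (q # u)) = dsc v + 1 + dsc (q # u)" using dsc_append[of v "q # u"] assms(1) by simp
    then show ?thesis using dq False by simp
  qed
qed

locale tp =
  fixes n i j d :: nat
  assumes n3: "3 \<le> n" and i1: "1 \<le> i" and im: "i + 2 \<le> n" and j1: "1 \<le> j" and jm: "j + 2 \<le> n"
    and ij: "i \<noteq> j"
begin

definition mm :: nat where "mm = n - 1"

lemma mm_facts: "2 \<le> mm" "mm < n" "i < mm" "j < mm" "mm \<noteq> i" "mm \<noteq> j" "mm \<noteq> n" "i \<noteq> n" "j \<noteq> n"
  "i < n" "j < n" "mm \<in> {1..n}" "Suc mm = n"
  using n3 i1 im j1 jm unfolding mm_def by auto

definition S where "S = {w \<in> permutations_of_set {1..n}. des w = d \<and> sublist [i, n, j] w}"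
definition S' where "S' = {w \<in> permutations_of_set {1..n}. des w = d \<and> sublist [i + 1, n, j + 1] w}"

lemma bS: "b_factor n d i j = card {w \<in> S. ballot w}"
  unfolding b_factor_alt S_def ballot_perms_def by (rule arg_cong[where f=card]) auto
lemma bS': "b_factor n d (i + 1) (j + 1) = card {w \<in> S'. ballot w}"
  unfolding b_factor_alt S'_def ballot_perms_def by (rule arg_cong[where f=card]) auto

definition dd :: "nat list \<Rightarrow> nat list \<Rightarrow> nat" where
  "dd u v = dsc u + dsc v + (if v = [] then 0 else 1)"

definition Pre :: "nat list \<Rightarrow> nat list \<Rightarrow> bool" where
  "Pre u v \<longleftrightarrow> distinct (u @ v) \<and> set u \<union> set v = {1..n} - {mm} \<and> (sublist [i, n, j] u \<or> sublist [i, n, j] v)"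

definition Good :: "nat list \<Rightarrow> nat list \<Rightarrow> bool" where
  "Good u v \<longleftrightarrow> Pre u v \<and> dd u v = d"

lemma val: "x \<in> {1..n} - {mm} \<Longrightarrow> x < mm \<or> x = n"
  using mm_facts by auto

lemma sub_not_last: "distinct u \<Longrightarrow> sublist [x, y, z] u \<Longrightarrow> last u \<noteq> y"
proof -
  assume "distinct u" "sublist [x, y, z] u"
  then obtain ps ss where u: "u = ps @ [x, y, z] @ ss" unfolding sublist_def by blast
  have "last u \<in> set (z # ss)" using u by (simp add: last_in_set)
  moreover have "y \<notin> set (z # ss)" using \<open>distinct u\<close> u by auto
  ultimately show ?thesis by blast
qed

lemma sub_not_hd: "distinct u \<Longrightarrow> sublist [x, y, z] u \<Longrightarrow> hd u \<noteq> y"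
proof -
  assume "distinct u" "sublist [x, y, z] u"
  then obtain ps ss where u: "u = ps @ [x, y, z] @ ss" unfolding sublist_def by blast
  have "hd u \<in> set (ps @ [x])" using u by (cases ps) auto
  moreover have "y \<notin> set (ps @ [x])" using \<open>distinct u\<close> u by auto
  ultimately show ?thesis by blast
qed

lemma sub_mem: "sublist [x, y, z] u \<Longrightarrow> y \<in> set u"
  unfolding sublist_def by auto

lemma Pre_nb:
  assumes "Pre u v"
  shows "u \<noteq> [] \<Longrightarrow> last u < mm" "v \<noteq> [] \<Longrightarrow> hd v < mm"
proof -
  have d: "distinct (u @ v)" and s: "set u \<union> set v = {1..n} - {mm}"
    and f: "sublist [i, n, j] u \<or> sublist [i, n, j] v" using assms unfolding Pre_def by auto
  have du: "distinct u" and dv: "distinct v" and disj: "\<And>x. x \<in> set u \<Longrightarrow> x \<notin> set v" using d by auto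
  have sU: "\<And>x. x \<in> set u \<Longrightarrow> x \<in> {1..n} - {mm}" using s by (metis Un_iff)
  have sV: "\<And>x. x \<in> set v \<Longrightarrow> x \<in> {1..n} - {mm}" using s by (metis Un_iff)
  {
    assume une: "u \<noteq> []"
    have "last u \<noteq> n"
    proof
      assume ln: "last u = n"
      then have "n \<in> set u" using last_in_set[OF une] by simp
      then have "n \<notin> set v" using disj by simp
      then have "\<not> sublist [i, n, j] v" using sub_mem by metis
      then have "sublist [i, n, j] u" using f by simp
      then have "last u \<noteq> n" using sub_not_last[OF du] by blast
      then show False using ln by simp
    qed
    moreover have "last u \<in> {1..n} - {mm}" using sU last_in_set[OF une] by simp
    ultimately show "last u < mm" using val[of "last u"] by blast
  }
  {
    assume vne: "v \<noteq> []"
    have "hd v \<noteq> n"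
    proof
      assume hn: "hd v = n"
      then have "n \<in> set v" using hd_in_set[OF vne] by simp
      then have "n \<notin> set u" using disj by metis
      then have "\<not> sublist [i, n, j] u" using sub_mem by metis
      then have "sublist [i, n, j] v" using f by simp
      then have "hd v \<noteq> n" using sub_not_hd[OF dv] by blast
      then show False using hn by simp
    qed
    moreover have "hd v \<in> {1..n} - {mm}" using sV hd_in_set[OF vne] by simp
    ultimately show "hd v < mm" using val[of "hd v"] by blast
  }
qed

lemma Pre_des: "Pre u v \<Longrightarrow> des (u @ mm # v) = dd u v"
proof -
  assume P: "Pre u v"
  have "dsc (u @ mm # v) = dsc u + dsc v + (if v = [] then 0 else 1)"
    by (rule dsc_peak) (use Pre_nb[OF P] in auto)
  then show ?thesis unfolding des_dsc dd_def .
qed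

lemma S_iff:
  assumes "mm \<notin> set u" "mm \<notin> set v"
  shows "u @ mm # v \<in> S \<longleftrightarrow> Good u v"
proof
  assume w: "u @ mm # v \<in> S"
  then have s: "set (u @ mm # v) = {1..n}" and dis: "distinct (u @ mm # v)"
    and de: "des (u @ mm # v) = d" and f: "sublist [i, n, j] (u @ mm # v)"
    unfolding S_def permutations_of_set_def by auto
  have "distinct (u @ v)" using dis by auto
  moreover have "set u \<union> set v = {1..n} - {mm}" using s assms by auto
  moreover have "sublist [i, n, j] u \<or> sublist [i, n, j] v" using fac_pivot[OF f] mm_facts by auto
  ultimately have P: "Pre u v" unfolding Pre_def by blast
  then show "Good u v" using de Pre_des unfolding Good_def by simp
next
  assume G: "Good u v"
  then have P: "Pre u v" and dd: "dd u v = d" unfolding Good_def by auto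
  have "set (u @ mm # v) = {1..n}" using P mm_facts unfolding Pre_def by auto
  moreover have "distinct (u @ mm # v)" using P assms unfolding Pre_def by auto
  moreover have "des (u @ mm # v) = d" using Pre_des[OF P] dd by simp
  moreover have "sublist [i, n, j] (u @ mm # v)"
    using P sublist_app_l[of "[i, n, j]" u "mm # v"] sublist_app_r[of "[i, n, j]" v "u @ [mm]"]
    unfolding Pre_def by auto
  ultimately show "u @ mm # v \<in> S" unfolding S_def permutations_of_set_def by simp
qed

definition A :: "nat list \<Rightarrow> nat list" where "A w = spl mm w"
definition B :: "nat list \<Rightarrow> nat list" where "B w = spr mm w"

lemma S_dec:
  assumes "w \<in> S"
  shows "w = A w @ mm # B w" "mm \<notin> set (A w)" "mm \<notin> set (B w)" "Good (A w) (B w)"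
proof -
  have s: "set w = {1..n}" and dis: "distinct w" using assms unfolding S_def permutations_of_set_def by auto
  have "mm \<in> set w" using s mm_facts by simp
  then show w: "w = A w @ mm # B w" and "mm \<notin> set (A w)" unfolding A_def B_def using spl_spr by auto
  show "mm \<notin> set (B w)" using dis w by (metis distinct.simps(2) distinct_append)
  then show "Good (A w) (B w)" using S_iff \<open>mm \<notin> set (A w)\<close> w assms by metis
qed

lemma AB_eq:
  assumes "mm \<notin> set u"
  shows "A (u @ mm # v) = u" "B (u @ mm # v) = v"
  unfolding A_def B_def using spl_spr_eq assms by auto

lemma Good_ne: "Good u v \<Longrightarrow> u \<noteq> [] \<or> v \<noteq> []"
  unfolding Good_def Pre_def by auto

lemma P_char:
  assumes "w \<in> S"
  shows "ballot w \<longleftrightarrow> (if A w = [] then False else if B w = [] then geq 0 (A w)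
           else geq 0 (A w) \<and> geq (- hgt (A w)) (B w))"
proof -
  have w: "w = A w @ mm # B w" and G: "Good (A w) (B w)" using S_dec[OF assms] by auto
  have P: "Pre (A w) (B w)" using G unfolding Good_def by simp
  note nb = Pre_nb[OF P]
  show ?thesis
  proof (cases "A w = []")
    case True
    then have "B w \<noteq> []" using Good_ne[OF G] by simp
    then show ?thesis using geq_peak_first[OF _ nb(2)] w True unfolding ballot_geq by (metis append_Nil)
  next
    case F: False
    show ?thesis
    proof (cases "B w = []")
      case True then show ?thesis using geq_peak_last[OF F nb(1)[OF F]] w F unfolding ballot_geq by metis
    next
      case False then show ?thesis using geq_peak_both[OF F False nb(1)[OF F] nb(2)[OF False]] w F
        unfolding ballot_geq by metis
    qed
  qed
qed

definition f :: "nat \<Rightarrow> nat" where "f x = (if x = n then n else x + 1)"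
definition g :: "nat \<Rightarrow> nat" where "g x = (if x = n then n else x - 1)"

definition Phi :: "nat list \<Rightarrow> nat list" where
  "Phi w = map f (B w) @ 1 # map f (A w)"

lemma f_mono: "a \<in> {1..n} - {mm} \<Longrightarrow> c \<in> {1..n} - {mm} \<Longrightarrow> (f a < f c \<longleftrightarrow> a < c)"
  using val[of a] val[of c] mm_facts unfolding f_def by auto

lemma f_gt1: "a \<in> {1..n} - {mm} \<Longrightarrow> 1 < f a"
  unfolding f_def using mm_facts by auto

lemma Q_char:
  assumes "w \<in> S"
  shows "ballot (Phi w) \<longleftrightarrow> (if A w = [] then geq 0 (B w) \<and> 1 \<le> hgt (B w)
           else if B w = [] then geq (-1) (A w)
           else geq 0 (B w) \<and> 1 \<le> hgt (B w) \<and> geq (- hgt (B w)) (A w))"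
proof -
  have G: "Good (A w) (B w)" using S_dec[OF assms] by auto
  have sA: "set (A w) \<subseteq> {1..n} - {mm}" and sB: "set (B w) \<subseteq> {1..n} - {mm}"
    using G unfolding Good_def Pre_def by auto
  have mA: "\<And>a c. a \<in> set (A w) \<Longrightarrow> c \<in> set (A w) \<Longrightarrow> (f a < f c \<longleftrightarrow> a < c)"
    using f_mono subsetD[OF sA] by simp
  have mB: "\<And>a c. a \<in> set (B w) \<Longrightarrow> c \<in> set (B w) \<Longrightarrow> (f a < f c \<longleftrightarrow> a < c)"
    using f_mono subsetD[OF sB] by simp
  have gA: "\<And>k. geq k (map f (A w)) = geq k (A w)" using mono_on_geq[OF mA] .
  have gB: "\<And>k. geq k (map f (B w)) = geq k (B w)" using mono_on_geq[OF mB] .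
  have hB: "hgt (map f (B w)) = hgt (B w)" using mono_on_hgt(1)[OF mB] .
  have lB: "1 < last (map f (B w))" if ne: "B w \<noteq> []"
  proof -
    have "last (B w) \<in> {1..n} - {mm}" using sB last_in_set[OF ne] by (rule subsetD)
    then show ?thesis using f_gt1[of "last (B w)"] last_map[OF ne, of f] by simp
  qed
  have hA: "1 < hd (map f (A w))" if ne: "A w \<noteq> []"
  proof -
    have "hd (A w) \<in> {1..n} - {mm}" using sA hd_in_set[OF ne] by (rule subsetD)
    then show ?thesis using f_gt1[of "hd (A w)"] hd_map[OF ne, of f] by simp
  qed
  show ?thesis
  proof (cases "A w = []")
    case True
    then have ne: "B w \<noteq> []" using Good_ne[OF G] by simp
    have "Phi w = map f (B w) @ [1]" unfolding Phi_def using True by simp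
    then show ?thesis using geq_valley_last[of "map f (B w)" 1] ne lB gB hB True unfolding ballot_geq by simp
  next
    case F: False
    show ?thesis
    proof (cases "B w = []")
      case True
      have "Phi w = 1 # map f (A w)" unfolding Phi_def using True by simp
      then show ?thesis using geq_valley_first[of "map f (A w)" 1] F hA gA True unfolding ballot_geq by simp
    next
      case False
      have "ballot (Phi w) \<longleftrightarrow> geq 0 (map f (B w)) \<and> 1 \<le> hgt (map f (B w)) \<and> geq (- hgt (map f (B w))) (map f (A w))"
        unfolding Phi_def ballot_geq using geq_valley_both[of "map f (A w)" "map f (B w)" 1] F False lB hA by simp
      then show ?thesis using F False gA gB hB by simp
    qed
  qed
qed

end

context tp begin

abbreviation V where "V \<equiv> {1..n} - {mm}"

lemma f_inj: "inj_on f V"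
  by (rule inj_onI) (metis f_mono less_irrefl linorder_neqE_nat)

lemma f_img: "f ` V = {2..n}"
proof (rule set_eqI, rule iffI)
  fix y assume "y \<in> f ` V"
  then obtain x where x: "x \<in> V" "y = f x" by blast
  then show "y \<in> {2..n}" using val[OF x(1)] mm_facts unfolding f_def by auto
next
  fix y assume y: "y \<in> {2..n}"
  show "y \<in> f ` V"
  proof (cases "y = n")
    case True
    then have "y = f n" "n \<in> V" unfolding f_def using mm_facts by auto
    then show ?thesis by blast
  next
    case False
    then have "y - 1 \<in> V" "y = f (y - 1)" using y mm_facts unfolding f_def by auto
    then show ?thesis by blast
  qed
qed

lemma g_mono: "a \<in> {2..n} \<Longrightarrow> c \<in> {2..n} \<Longrightarrow> (g a < g c \<longleftrightarrow> a < c)"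
  unfolding g_def using mm_facts by auto

lemma g_inj: "inj_on g {2..n}"
  by (rule inj_onI) (metis g_mono less_irrefl linorder_neqE_nat)

lemma g_img: "g ` {2..n} = V"
proof (rule set_eqI, rule iffI)
  fix y assume "y \<in> g ` {2..n}"
  then obtain x where x: "x \<in> {2..n}" "y = g x" by blast
  then show "y \<in> V" using mm_facts unfolding g_def by auto
next
  fix y assume y: "y \<in> V"
  have "y + 1 \<in> {2..n} \<and> y = g (y + 1) \<or> y = n \<and> n \<in> {2..n} \<and> y = g n"
    using val[OF y] y mm_facts unfolding g_def by auto
  then show "y \<in> g ` {2..n}" by blast
qed

lemma fg: "x \<in> {2..n} \<Longrightarrow> f (g x) = x"
  unfolding f_def g_def using mm_facts by auto

lemma Phi_in:
  assumes w: "w \<in> S"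
  shows "Phi w \<in> S'"
proof -
  let ?u = "A w" and ?v = "B w"
  have G: "Good ?u ?v" using S_dec[OF w] by auto
  have d: "distinct (?u @ ?v)" and s: "set ?u \<union> set ?v = V"
    and fc: "sublist [i, n, j] ?u \<or> sublist [i, n, j] ?v" and dd: "dd ?u ?v = d"
    using G unfolding Good_def Pre_def by auto
  have sA: "set ?u \<subseteq> V" and sB: "set ?v \<subseteq> V" using s by auto
  have "set (Phi w) = f ` (set ?u \<union> set ?v) \<union> {1}" unfolding Phi_def by auto
  also have "f ` (set ?u \<union> set ?v) = {2..n}" using s f_img by simp
  also have "{2..n} \<union> {1} = {1..n}" using mm_facts by auto
  finally have s1: "set (Phi w) = {1..n}" .
  have svu: "set (?v @ ?u) = V" using s by auto
  have dvu: "distinct (?v @ ?u)" using d by auto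
  have "distinct (map f (?v @ ?u))" unfolding distinct_map using dvu f_inj svu by simp
  moreover have "set (map f (?v @ ?u)) = {2..n}" using f_img svu by (simp only: set_map)
  then have "1 \<notin> set (map f (?v @ ?u))" by simp
  ultimately have d1: "distinct (Phi w)" unfolding Phi_def by auto
  have mA: "\<And>a c. a \<in> set ?u \<Longrightarrow> c \<in> set ?u \<Longrightarrow> (f a < f c \<longleftrightarrow> a < c)"
    using f_mono subsetD[OF sA] by simp
  have mB: "\<And>a c. a \<in> set ?v \<Longrightarrow> c \<in> set ?v \<Longrightarrow> (f a < f c \<longleftrightarrow> a < c)"
    using f_mono subsetD[OF sB] by simp
  have lB: "1 < last (map f ?v)" if ne: "?v \<noteq> []"
  proof -
    have "last ?v \<in> V" using sB last_in_set[OF ne] by (rule subsetD)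
    then show ?thesis using f_gt1[of "last ?v"] last_map[OF ne, of f] by simp
  qed
  have hA: "1 < hd (map f ?u)" if ne: "?u \<noteq> []"
  proof -
    have "hd ?u \<in> V" using sA hd_in_set[OF ne] by (rule subsetD)
    then show ?thesis using f_gt1[of "hd ?u"] hd_map[OF ne, of f] by simp
  qed
  have "dsc (Phi w) = dsc (map f ?v) + dsc (map f ?u) + (if map f ?v = [] then 0 else 1)"
    unfolding Phi_def by (rule dsc_valley) (use lB hA in auto)
  also have "\<dots> = dd ?u ?v" unfolding dd_def using mono_on_hgt(2)[OF mA] mono_on_hgt(2)[OF mB] by simp
  finally have de: "des (Phi w) = d" using dd unfolding des_dsc by simp
  have fi: "f i = i + 1" "f n = n" "f j = j + 1" unfolding f_def using mm_facts by auto
  have "sublist [i + 1, n, j + 1] (map f ?u) \<or> sublist [i + 1, n, j + 1] (map f ?v)"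
  proof (cases "sublist [i, n, j] ?u")
    case True then show ?thesis using map_mono_sublist[OF True, of f] fi by simp
  next
    case False then have "sublist [i, n, j] ?v" using fc by simp
    then show ?thesis using map_mono_sublist[of "[i, n, j]" ?v f] fi by simp
  qed
  then have "sublist [i + 1, n, j + 1] (Phi w)" unfolding Phi_def
    using sublist_app_l[of "[i + 1, n, j + 1]" "map f ?v" "1 # map f ?u"]
      sublist_app_r[of "[i + 1, n, j + 1]" "map f ?u" "map f ?v @ [1]"] by auto
  then show ?thesis unfolding S'_def permutations_of_set_def using s1 d1 de by simp
qed

lemma Phi_inj: "inj_on Phi S"
proof (rule inj_onI)
  fix w1 w2 assume w1: "w1 \<in> S" and w2: "w2 \<in> S" and e: "Phi w1 = Phi w2"
  have G1: "Good (A w1) (B w1)" and G2: "Good (A w2) (B w2)" using S_dec w1 w2 by auto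
  have s1: "set (A w1) \<union> set (B w1) = V" and s2: "set (A w2) \<union> set (B w2) = V"
    using G1 G2 unfolding Good_def Pre_def by auto
  have b1: "set (B w1) \<subseteq> V" using s1 by auto
  have b2: "set (B w2) \<subseteq> V" using s2 by auto
  have "set (map f (B w1)) \<subseteq> {2..n}" using image_mono[OF b1, of f] f_img by simp
  moreover have "set (map f (B w2)) \<subseteq> {2..n}" using image_mono[OF b2, of f] f_img by simp
  ultimately have n1: "1 \<notin> set (map f (B w1))" "1 \<notin> set (map f (B w2))" by auto
  have "spl 1 (Phi w1) = map f (B w1)" "spr 1 (Phi w1) = map f (A w1)"
    using spl_spr_eq[OF _ n1(1)] unfolding Phi_def by auto
  moreover have "spl 1 (Phi w2) = map f (B w2)" "spr 1 (Phi w2) = map f (A w2)"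
    using spl_spr_eq[OF _ n1(2)] unfolding Phi_def by auto
  ultimately have mB: "map f (B w1) = map f (B w2)" and mA: "map f (A w1) = map f (A w2)" using e by auto
  have "set (B w1) \<union> set (B w2) \<subseteq> V" using s1 s2 by auto
  then have "inj_on f (set (B w1) \<union> set (B w2))" using f_inj inj_on_subset by blast
  then have eB: "B w1 = B w2" using mB inj_on_map_eq_map by blast
  have "set (A w1) \<union> set (A w2) \<subseteq> V" using s1 s2 by auto
  then have "inj_on f (set (A w1) \<union> set (A w2))" using f_inj inj_on_subset by blast
  then have eA: "A w1 = A w2" using mA inj_on_map_eq_map by blast
  have "w1 = A w1 @ mm # B w1" using S_dec(1)[OF w1] .
  also have "\<dots> = A w2 @ mm # B w2" using eA eB by simp
  also have "\<dots> = w2" using S_dec(1)[OF w2] by simp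
  finally show "w1 = w2" .
qed

lemma atLeast_minus_bot: "{1..n} - {1} = {2..(n::nat)}"
proof (rule set_eqI)
  fix x show "x \<in> {1..n} - {1} \<longleftrightarrow> x \<in> {2..n}" by (cases x) auto
qed

lemma Phi_surj: "S' \<subseteq> Phi ` S"
proof
  fix w' assume w': "w' \<in> S'"
  have s: "set w' = {1..n}" and dw: "distinct w'" and de: "des w' = d"
    and fc: "sublist [i + 1, n, j + 1] w'" using w' unfolding S'_def permutations_of_set_def by auto
  have "1 \<in> set w'" using s mm_facts by simp
  then have wd: "w' = spl 1 w' @ 1 # spr 1 w'" using spl_spr by blast
  define c where "c = spl 1 w'"
  define e where "e = spr 1 w'"
  have w'ce: "w' = c @ 1 # e" using wd unfolding c_def e_def .
  have dce: "distinct (c @ e)" "1 \<notin> set c" "1 \<notin> set e" using dw w'ce by auto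
  have "set c \<union> set e = set w' - {1}" using w'ce dce(2,3) by auto
  also have "\<dots> = {2..n}" using s atLeast_minus_bot by simp
  finally have sce: "set c \<union> set e = {2..n}" .
  have sc: "set c \<subseteq> {2..n}" and se: "set e \<subseteq> {2..n}" using sce by auto
  define u where "u = map g e"
  define v where "v = map g c"
  have "set u \<union> set v = g ` (set c \<union> set e)" unfolding u_def v_def by auto
  then have suv: "set u \<union> set v = V" using sce g_img by simp
  have "mm \<notin> V" by simp
  then have mu: "mm \<notin> set u" "mm \<notin> set v" using suv by (metis Un_iff)+
  have duv: "distinct (u @ v)"
  proof -
    have sec: "set (e @ c) = {2..n}" using sce by (simp add: Un_commute)
    have "distinct (e @ c)" using dce by auto
    then have "distinct (map g (e @ c))" unfolding distinct_map using g_inj sec by simp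
    then show ?thesis unfolding u_def v_def by simp
  qed
  have gi: "g (i + 1) = i" "g n = n" "g (j + 1) = j" unfolding g_def using mm_facts by auto
  have "sublist [i + 1, n, j + 1] c \<or> sublist [i + 1, n, j + 1] e"
    using fac_pivot[of "i + 1" n "j + 1" c 1 e] fc w'ce mm_facts i1 j1 by auto
  then have fuv: "sublist [i, n, j] u \<or> sublist [i, n, j] v"
  proof
    assume h: "sublist [i + 1, n, j + 1] c"
    show ?thesis unfolding v_def using map_mono_sublist[OF h, of g] gi by simp
  next
    assume h: "sublist [i + 1, n, j + 1] e"
    show ?thesis unfolding u_def using map_mono_sublist[OF h, of g] gi by simp
  qed
  have mC: "\<And>a b. a \<in> set c \<Longrightarrow> b \<in> set c \<Longrightarrow> (g a < g b \<longleftrightarrow> a < b)" using g_mono subsetD[OF sc] by simp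
  have mE: "\<And>a b. a \<in> set e \<Longrightarrow> b \<in> set e \<Longrightarrow> (g a < g b \<longleftrightarrow> a < b)" using g_mono subsetD[OF se] by simp
  have lc: "1 < last c" if ne: "c \<noteq> []" using subsetD[OF sc last_in_set[OF ne]] by simp
  have he: "1 < hd e" if ne: "e \<noteq> []" using subsetD[OF se hd_in_set[OF ne]] by simp
  have "dsc w' = dsc c + dsc e + (if c = [] then 0 else 1)"
    unfolding w'ce by (rule dsc_valley) (use lc he in auto)
  then have "dd u v = d" unfolding dd_def u_def v_def using de mono_on_hgt(2)[OF mC] mono_on_hgt(2)[OF mE]
    unfolding des_dsc by simp
  then have G: "Good u v" unfolding Good_def Pre_def using duv suv fuv by simp
  define w where "w = u @ mm # v"
  have wS: "w \<in> S" unfolding w_def using S_iff[OF mu] G by simp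
  have "Phi w = map f v @ 1 # map f u" unfolding Phi_def w_def using AB_eq[OF mu(1)] by simp
  also have "map f v = c"
  proof -
    have "map f v = map (f \<circ> g) c" unfolding v_def by simp
    also have "\<dots> = c" by (rule map_idI) (use fg subsetD[OF sc] in simp)
    finally show ?thesis .
  qed
  also have "map f u = e"
  proof -
    have "map f u = map (f \<circ> g) e" unfolding u_def by simp
    also have "\<dots> = e" by (rule map_idI) (use fg subsetD[OF se] in simp)
    finally show ?thesis .
  qed
  finally have "Phi w = w'" using w'ce by simp
  then show "w' \<in> Phi ` S" using wS by blast
qed

lemma Phi_img: "Phi ` S = S'"
proof (rule subset_antisym)
  show "Phi ` S \<subseteq> S'" using Phi_in by (intro image_subsetI)
  show "S' \<subseteq> Phi ` S" using Phi_surj .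
qed

lemma card_S'_ballot: "card {w \<in> S'. ballot w} = card {w \<in> S. ballot (Phi w)}"
proof -
  have "{w \<in> S'. ballot w} = Phi ` {w \<in> S. ballot (Phi w)}"
  proof (rule set_eqI, rule iffI)
    fix x assume x: "x \<in> {w \<in> S'. ballot w}"
    then have "x \<in> Phi ` S" using Phi_surj by auto
    then obtain w where "w \<in> S" "x = Phi w" by blast
    then show "x \<in> Phi ` {w \<in> S. ballot (Phi w)}" using x by auto
  next
    fix x assume "x \<in> Phi ` {w \<in> S. ballot (Phi w)}"
    then obtain w where "w \<in> S" "ballot (Phi w)" "x = Phi w" by blast
    then show "x \<in> {w \<in> S'. ballot w}" using Phi_in by auto
  qed
  moreover have "inj_on Phi {w \<in> S. ballot (Phi w)}" using Phi_inj by (rule inj_on_subset) auto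
  ultimately show ?thesis by (simp add: card_image)
qed

end

lemma stp_neg1: "stp x y = -1 \<Longrightarrow> y < x" unfolding stp_def by (auto split: if_splits)
lemma stp_pos1: "stp x y = 1 \<Longrightarrow> x < y" unfolding stp_def by (auto split: if_splits)

context tp begin

lemma finite_S: "finite S"
proof -
  have "S \<subseteq> permutations_of_set {1..n}" unfolding S_def by auto
  then show ?thesis using finite_permutations_of_set finite_subset by blast
qed

definition G where "G = {w \<in> S. A w \<noteq> [] \<and> B w \<noteq> []}"
definition E1 where "E1 = {w \<in> S. A w \<noteq> [] \<and> B w = []}"
definition E2 where "E2 = {w \<in> S. A w = []}"

lemma card_split3:
  "card {w \<in> S. R w} = card {w \<in> G. R w} + card {w \<in> E1. R w} + card {w \<in> E2. R w}"
proof -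
  have e: "{w \<in> S. R w} = ({w \<in> G. R w} \<union> {w \<in> E1. R w}) \<union> {w \<in> E2. R w}"
    unfolding G_def E1_def E2_def by auto
  have f: "finite {w \<in> G. R w}" "finite {w \<in> E1. R w}" "finite {w \<in> E2. R w}"
    unfolding G_def E1_def E2_def using finite_S by auto
  have d1: "{w \<in> G. R w} \<inter> {w \<in> E1. R w} = {}" unfolding G_def E1_def by auto
  have d2: "({w \<in> G. R w} \<union> {w \<in> E1. R w}) \<inter> {w \<in> E2. R w} = {}" unfolding G_def E1_def E2_def by auto
  show ?thesis unfolding e using f d1 d2 by (simp add: card_Un_disjoint)
qed

definition Psi where "Psi w = B w @ mm # A w"

lemma Pre_sym: "Pre u v \<Longrightarrow> Pre v u"
  unfolding Pre_def by (auto simp: Un_commute)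

lemma Psi_G:
  assumes w: "w \<in> G"
  shows "Psi w \<in> G" "A (Psi w) = B w" "B (Psi w) = A w" "Psi (Psi w) = w"
proof -
  have wS: "w \<in> S" and ne: "A w \<noteq> []" "B w \<noteq> []" using w unfolding G_def by auto
  note D = S_dec[OF wS]
  have P: "Pre (A w) (B w)" and dd: "dd (A w) (B w) = d" using D(4) unfolding Good_def by auto
  have "dd (B w) (A w) = d" using dd ne unfolding dd_def by simp
  then have "Good (B w) (A w)" using Pre_sym[OF P] unfolding Good_def by simp
  then have S1: "Psi w \<in> S" unfolding Psi_def using S_iff D(2,3) by simp
  show A1: "A (Psi w) = B w" and B1: "B (Psi w) = A w" unfolding Psi_def using AB_eq[OF D(3)] by auto
  show "Psi w \<in> G" using S1 A1 B1 ne unfolding G_def by simp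
  show "Psi (Psi w) = w" unfolding Psi_def using A1 B1 D(1) unfolding Psi_def by simp
qed

lemma card_Psi: "card {w \<in> G. R (Psi w)} = card {w \<in> G. R w}"
proof -
  have "Psi ` {w \<in> G. R (Psi w)} = {w \<in> G. R w}"
  proof (rule set_eqI, rule iffI)
    fix x assume "x \<in> Psi ` {w \<in> G. R (Psi w)}"
    then obtain w where "w \<in> G" "R (Psi w)" "x = Psi w" by blast
    then show "x \<in> {w \<in> G. R w}" using Psi_G by simp
  next
    fix x assume x: "x \<in> {w \<in> G. R w}"
    then have "Psi x \<in> {w \<in> G. R (Psi w)}" using Psi_G by simp
    moreover have "x = Psi (Psi x)" using Psi_G x by simp
    ultimately show "x \<in> Psi ` {w \<in> G. R (Psi w)}" by (rule rev_image_eqI)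
  qed
  moreover have "inj_on Psi {w \<in> G. R (Psi w)}"
  proof (rule inj_onI)
    fix x y assume "x \<in> {w \<in> G. R (Psi w)}" "y \<in> {w \<in> G. R (Psi w)}" "Psi x = Psi y"
    then show "x = y" using Psi_G(4) by (metis (no_types, lifting) mem_Collect_eq)
  qed
  ultimately show ?thesis by (metis card_image)
qed

definition X where "X = {w \<in> G. geq 0 (B w) \<and> hgt (B w) = 0 \<and> geq 0 (A w)}"
definition Y1 where "Y1 = {w \<in> E1. geq (-1) (A w) \<and> \<not> geq 0 (A w)}"
definition Y2 where "Y2 = {w \<in> E2. geq 0 (B w) \<and> 1 \<le> hgt (B w)}"

lemma PG: "card {w \<in> G. ballot w} = card {w \<in> G. geq 0 (B w) \<and> 1 \<le> hgt (B w) \<and> geq (- hgt (B w)) (A w)} + card X"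
proof -
  have "card {w \<in> G. ballot w} = card {w \<in> G. ballot (Psi w)}" using card_Psi[of ballot] by simp
  also have "{w \<in> G. ballot (Psi w)} = {w \<in> G. geq 0 (B w) \<and> geq (- hgt (B w)) (A w)}"
  proof (rule Collect_cong)
    fix w show "(w \<in> G \<and> ballot (Psi w)) = (w \<in> G \<and> geq 0 (B w) \<and> geq (- hgt (B w)) (A w))"
    proof (cases "w \<in> G")
      case True
      have "Psi w \<in> S" using Psi_G(1)[OF True] unfolding G_def by simp
      then show ?thesis using P_char[of "Psi w"] Psi_G(2,3)[OF True] True unfolding G_def by simp
    qed simp
  qed
  also have "{w \<in> G. geq 0 (B w) \<and> geq (- hgt (B w)) (A w)} =
     {w \<in> G. geq 0 (B w) \<and> 1 \<le> hgt (B w) \<and> geq (- hgt (B w)) (A w)} \<union> X"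
  proof (rule set_eqI)
    fix w
    have "geq 0 (B w) \<Longrightarrow> 0 \<le> hgt (B w)" using geq_hgt by fastforce
    then show "w \<in> {w \<in> G. geq 0 (B w) \<and> geq (- hgt (B w)) (A w)} \<longleftrightarrow>
      w \<in> {w \<in> G. geq 0 (B w) \<and> 1 \<le> hgt (B w) \<and> geq (- hgt (B w)) (A w)} \<union> X"
      unfolding X_def by (cases "hgt (B w) = 0") auto
  qed
  also have "card \<dots> = card {w \<in> G. geq 0 (B w) \<and> 1 \<le> hgt (B w) \<and> geq (- hgt (B w)) (A w)} + card X"
  proof (rule card_Un_disjoint)
    show "finite {w \<in> G. geq 0 (B w) \<and> 1 \<le> hgt (B w) \<and> geq (- hgt (B w)) (A w)}"
      unfolding G_def using finite_S by auto
    show "finite X" unfolding X_def G_def using finite_S by auto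
    show "{w \<in> G. geq 0 (B w) \<and> 1 \<le> hgt (B w) \<and> geq (- hgt (B w)) (A w)} \<inter> X = {}"
      unfolding X_def by auto
  qed
  finally show ?thesis .
qed

lemma QG: "{w \<in> G. ballot (Phi w)} = {w \<in> G. geq 0 (B w) \<and> 1 \<le> hgt (B w) \<and> geq (- hgt (B w)) (A w)}"
proof (rule Collect_cong)
  fix w show "(w \<in> G \<and> ballot (Phi w)) = (w \<in> G \<and> geq 0 (B w) \<and> 1 \<le> hgt (B w) \<and> geq (- hgt (B w)) (A w))"
    using Q_char[of w] unfolding G_def by auto
qed

lemma PE1: "{w \<in> E1. ballot w} = {w \<in> E1. geq 0 (A w)}"
proof (rule Collect_cong)
  fix w show "(w \<in> E1 \<and> ballot w) = (w \<in> E1 \<and> geq 0 (A w))"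
    using P_char[of w] unfolding E1_def by auto
qed

lemma QE1: "card {w \<in> E1. ballot (Phi w)} = card {w \<in> E1. ballot w} + card Y1"
proof -
  have "{w \<in> E1. ballot (Phi w)} = {w \<in> E1. geq (-1) (A w)}"
  proof (rule Collect_cong)
    fix w show "(w \<in> E1 \<and> ballot (Phi w)) = (w \<in> E1 \<and> geq (-1) (A w))"
      using Q_char[of w] unfolding E1_def by auto
  qed
  also have "\<dots> = {w \<in> E1. geq 0 (A w)} \<union> Y1"
    unfolding Y1_def using geq_mono[of 0 _ "-1"] by auto
  also have "card \<dots> = card {w \<in> E1. geq 0 (A w)} + card Y1"
  proof (rule card_Un_disjoint)
    show "finite {w \<in> E1. geq 0 (A w)}" unfolding E1_def using finite_S by auto
    show "finite Y1" unfolding Y1_def E1_def using finite_S by auto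
    show "{w \<in> E1. geq 0 (A w)} \<inter> Y1 = {}" unfolding Y1_def by auto
  qed
  finally show ?thesis using PE1 by simp
qed

lemma PE2: "{w \<in> E2. ballot w} = {}"
  using P_char unfolding E2_def by auto

lemma QE2: "{w \<in> E2. ballot (Phi w)} = Y2"
  unfolding Y2_def
proof (rule Collect_cong)
  fix w show "(w \<in> E2 \<and> ballot (Phi w)) = (w \<in> E2 \<and> geq 0 (B w) \<and> 1 \<le> hgt (B w))"
    using Q_char[of w] unfolding E2_def by auto
qed

end

context tp begin

definition Chi where
  "Chi w = (if hd (A w) < last (B w) then (B w @ A w) @ [mm] else mm # (B w @ A w))"

lemma X_facts:
  assumes "w \<in> X"
  shows "w \<in> S" "A w \<noteq> []" "B w \<noteq> []" "Good (A w) (B w)" "geq 0 (B w)" "hgt (B w) = 0" "geq 0 (A w)"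
    "mm \<notin> set (A w)" "mm \<notin> set (B w)" "w = A w @ mm # B w"
  using assms S_dec unfolding X_def G_def by auto

lemma Chi_in: "w \<in> X \<Longrightarrow> Chi w \<in> Y1 \<union> Y2"
proof -
  assume w: "w \<in> X"
  note F = X_facts[OF w]
  let ?u = "A w" and ?v = "B w"
  have P: "Pre ?u ?v" and dd: "dd ?u ?v = d" using F(4) unfolding Good_def by auto
  have d0: "distinct (?u @ ?v)" and s0: "set ?u \<union> set ?v = V"
    and f0: "sublist [i, n, j] ?u \<or> sublist [i, n, j] ?v" using P unfolding Pre_def by auto
  have mvu: "mm \<notin> set (?v @ ?u)" using F(8,9) by simp
  have fvu: "sublist [i, n, j] (?v @ ?u)"
    using f0 sublist_app_l[of "[i, n, j]" ?v ?u] sublist_app_r[of "[i, n, j]" ?u ?v] by blast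
  have Pvu1: "Pre (?v @ ?u) []" unfolding Pre_def using d0 s0 fvu by (auto simp: Un_commute)
  have Pvu2: "Pre [] (?v @ ?u)" unfolding Pre_def using d0 s0 fvu by (auto simp: Un_commute)
  have hu: "0 \<le> hgt ?u" using geq_hgt[OF F(7)] .
  have neq: "hd ?u \<noteq> last ?v" using d0 hd_in_set[OF F(2)] last_in_set[OF F(3)] by auto
  show "Chi w \<in> Y1 \<union> Y2"
  proof (cases "hd ?u < last ?v")
    case True
    have c: "Chi w = (?v @ ?u) @ mm # []" unfolding Chi_def using True by simp
    have "dsc (?v @ ?u) = dsc ?v + 1 + dsc ?u" using dsc_append[OF F(3) F(2)] True by simp
    then have "dd (?v @ ?u) [] = d" using dd unfolding dd_def using F(3) by simp
    then have "Chi w \<in> S" unfolding c using S_iff[OF mvu] Pvu1 unfolding Good_def by simp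
    moreover have "A (Chi w) = ?v @ ?u" "B (Chi w) = []" unfolding c using AB_eq[OF mvu] by auto
    moreover have "geq (-1) (?v @ ?u)"
      using geq_append[OF F(3) F(2)] stp_down[OF True] F(5,6,7) geq_mono[OF F(5), of "-1"] by simp
    moreover have "\<not> geq 0 (?v @ ?u)"
    proof -
      have "\<not> geq 1 ?u" using geq_le0[of 1 ?u] by auto
      then show ?thesis using geq_append[OF F(3) F(2)] stp_down[OF True] F(6) by simp
    qed
    ultimately show ?thesis unfolding Y1_def E1_def using F(3) by simp
  next
    case False
    then have lt: "last ?v < hd ?u" using neq by simp
    have c: "Chi w = [] @ mm # (?v @ ?u)" unfolding Chi_def using False by simp
    have "dsc (?v @ ?u) = dsc ?v + dsc ?u" using dsc_append[OF F(3) F(2)] lt by simp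
    then have "dd [] (?v @ ?u) = d" using dd unfolding dd_def using F(3) by simp
    then have "Chi w \<in> S" unfolding c using S_iff[of "[]" "?v @ ?u"] mvu Pvu2 unfolding Good_def by simp
    moreover have "A (Chi w) = []" "B (Chi w) = ?v @ ?u" unfolding c using AB_eq[of "[]"] mvu by auto
    moreover have "geq 0 (?v @ ?u)"
      using geq_append[OF F(3) F(2)] stp_up[OF lt] F(5,6) geq_mono[OF F(7), of "-1"] by simp
    moreover have "1 \<le> hgt (?v @ ?u)" using hgt_append[OF F(3) F(2)] stp_up[OF lt] F(6) hu by simp
    ultimately show ?thesis unfolding Y2_def E2_def by simp
  qed
qed

lemma Chi_inj: "inj_on Chi X"
proof (rule inj_onI)
  fix w1 w2 assume w1: "w1 \<in> X" and w2: "w2 \<in> X" and e: "Chi w1 = Chi w2"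
  note F1 = X_facts[OF w1] and F2 = X_facts[OF w2]
  have hv1: "hd (B w1 @ A w1) \<noteq> mm"
  proof -
    have "hd (B w1) \<in> set (B w1)" using hd_in_set[OF F1(3)] .
    then have "hd (B w1) \<noteq> mm" using F1(9) by metis
    moreover have "hd (B w1 @ A w1) = hd (B w1)" using F1(3) by simp
    ultimately show ?thesis by simp
  qed
  have hv2: "hd (B w2 @ A w2) \<noteq> mm"
  proof -
    have "hd (B w2) \<in> set (B w2)" using hd_in_set[OF F2(3)] .
    then have "hd (B w2) \<noteq> mm" using F2(9) by metis
    moreover have "hd (B w2 @ A w2) = hd (B w2)" using F2(3) by simp
    ultimately show ?thesis by simp
  qed
  have eq: "B w1 @ A w1 = B w2 @ A w2" and tp1: "hd (A w1) < last (B w1) \<longleftrightarrow> hd (A w2) < last (B w2)"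
  proof -
    have "(hd (A w1) < last (B w1) \<and> hd (A w2) < last (B w2)) \<or>
          (\<not> hd (A w1) < last (B w1) \<and> \<not> hd (A w2) < last (B w2))"
    proof (rule ccontr)
      assume "\<not> ?thesis"
      then have "(hd (A w1) < last (B w1) \<and> \<not> hd (A w2) < last (B w2)) \<or>
                 (\<not> hd (A w1) < last (B w1) \<and> hd (A w2) < last (B w2))" by blast
      then show False
      proof
        assume h: "hd (A w1) < last (B w1) \<and> \<not> hd (A w2) < last (B w2)"
        then have "(B w1 @ A w1) @ [mm] = mm # (B w2 @ A w2)" using e unfolding Chi_def by simp
        then have "hd (B w1 @ A w1) = mm" using F1(3) by (cases "B w1") auto
        then show False using hv1 by simp
      next
        assume h: "\<not> hd (A w1) < last (B w1) \<and> hd (A w2) < last (B w2)"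
        then have "(B w2 @ A w2) @ [mm] = mm # (B w1 @ A w1)" using e unfolding Chi_def by simp
        then have "hd (B w2 @ A w2) = mm" using F2(3) by (cases "B w2") auto
        then show False using hv2 by simp
      qed
    qed
    then show "B w1 @ A w1 = B w2 @ A w2" "hd (A w1) < last (B w1) \<longleftrightarrow> hd (A w2) < last (B w2)"
      using e unfolding Chi_def by auto
  qed
  have neq1: "hd (A w1) \<noteq> last (B w1)" using F1(4) hd_in_set[OF F1(2)] last_in_set[OF F1(3)]
    unfolding Good_def Pre_def by auto
  have neq2: "hd (A w2) \<noteq> last (B w2)" using F2(4) hd_in_set[OF F2(2)] last_in_set[OF F2(3)]
    unfolding Good_def Pre_def by auto
  have "B w1 = B w2"
  proof (cases "hd (A w1) < last (B w1)")
    case True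
    then have t2: "hd (A w2) < last (B w2)" using tp1 by simp
    show ?thesis by (rule first_neg_unique[OF eq F1(3) F1(5) F1(6) stp_down[OF True] F2(3) F2(5) F2(6) stp_down[OF t2]])
  next
    case False
    then have t1: "last (B w1) < hd (A w1)" using neq1 by simp
    have "\<not> hd (A w2) < last (B w2)" using tp1 False by simp
    then have t2: "last (B w2) < hd (A w2)" using neq2 by simp
    show ?thesis by (rule last_zero_unique[OF eq F1(3) F1(6) stp_up[OF t1] F1(7) F2(3) F2(6) stp_up[OF t2] F2(7)])
  qed
  moreover then have "A w1 = A w2" using eq by simp
  ultimately show "w1 = w2" using F1(10) F2(10) by simp
qed

lemma Chi_surj: "Y1 \<union> Y2 \<subseteq> Chi ` X"
proof
  fix w' assume w': "w' \<in> Y1 \<union> Y2"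
  then have w'S: "w' \<in> S" unfolding Y1_def Y2_def E1_def E2_def by auto
  note D = S_dec[OF w'S]
  have P': "Pre (A w') (B w')" and dd': "dd (A w') (B w') = d" using D(4) unfolding Good_def by auto
  have ds': "distinct (A w' @ B w')" and ss': "set (A w') \<union> set (B w') = V"
    and fs': "sublist [i, n, j] (A w') \<or> sublist [i, n, j] (B w')" using P' unfolding Pre_def by auto
  have build: "w' \<in> Chi ` X" if c: "c = v @ u" and une: "u \<noteq> []" and vne: "v \<noteq> []"
    and gv: "geq 0 v" and hv: "hgt v = 0" and gu: "geq 0 u"
    and fc: "sublist [i, n, j] u \<or> sublist [i, n, j] v" and mc: "mm \<notin> set c"
    and sc: "set c = V" and dc: "distinct c" and dds: "dd u v = d"
    and ch: "(hd u < last v \<and> w' = c @ [mm]) \<or> (\<not> hd u < last v \<and> w' = mm # c)" for c u v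
  proof -
    have mu: "mm \<notin> set u" "mm \<notin> set v" using mc c by auto
    have "Pre u v" unfolding Pre_def using dc sc fc c by (auto simp: Un_commute)
    then have G: "Good u v" using dds unfolding Good_def by simp
    define w where "w = u @ mm # v"
    have wS: "w \<in> S" unfolding w_def using S_iff[OF mu] G by simp
    have ab: "A w = u" "B w = v" unfolding w_def using AB_eq[OF mu(1)] by auto
    have "w \<in> X" unfolding X_def G_def using wS ab une vne gv hv gu by simp
    moreover have "Chi w = w'" unfolding Chi_def ab using ch c by auto
    ultimately show ?thesis by blast
  qed
  show "w' \<in> Chi ` X"
  proof (cases "w' \<in> Y1")
    case True
    then have ne: "A w' \<noteq> []" and bn: "B w' = []" and g1: "geq (-1) (A w')" and g0: "\<not> geq 0 (A w')"
      unfolding Y1_def E1_def by auto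
    obtain v u where sp: "A w' = v @ u" "v \<noteq> []" "u \<noteq> []" "geq 0 v" "hgt v = 0"
      "stp (last v) (hd u) = -1" "geq 0 u" using first_neg_split[OF g1 g0] by blast
    have lt: "hd u < last v" using stp_neg1[OF sp(6)] .
    have fc: "sublist [i, n, j] (v @ u)" using fs' bn sp(1) by simp
    have fvu: "sublist [i, n, j] u \<or> sublist [i, n, j] v"
      using fac_first_neg[OF fc sp(2) sp(3) sp(4) sp(5) lt] mm_facts by auto
    have "dsc (v @ u) = dsc v + 1 + dsc u" using dsc_append[OF sp(2) sp(3)] lt by simp
    then have "dd u v = d" using dd' bn sp(1,2) unfolding dd_def by simp
    moreover have "w' = A w' @ [mm]" using D(1) bn by simp
    ultimately show ?thesis using build[OF sp(1) sp(3) sp(2) sp(4) sp(5) sp(7) fvu D(2)] ss' ds' bn lt by simp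
  next
    case False
    then have w2: "w' \<in> Y2" using w' by simp
    then have an: "A w' = []" and g0: "geq 0 (B w')" and h1: "1 \<le> hgt (B w')"
      unfolding Y2_def E2_def by auto
    obtain v u where sp: "B w' = v @ u" "v \<noteq> []" "u \<noteq> []" "geq 0 v" "hgt v = 0"
      "stp (last v) (hd u) = 1" "geq 0 u" using last_zero_split[OF g0 h1] by blast
    have lt: "last v < hd u" using stp_pos1[OF sp(6)] .
    have fc: "sublist [i, n, j] (v @ u)" using fs' an sp(1) by simp
    have fvu: "sublist [i, n, j] u \<or> sublist [i, n, j] v"
      using fac_last_zero[OF fc sp(2) sp(3) sp(7) lt] mm_facts by auto
    have "dsc (v @ u) = dsc v + dsc u" using dsc_append[OF sp(2) sp(3)] lt by simp
    then have "dd u v = d" using dd' an sp(1,2,3) unfolding dd_def by simp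
    moreover have "w' = mm # B w'" using D(1) an by simp
    moreover have "\<not> hd u < last v" using lt by simp
    ultimately show ?thesis using build[OF sp(1) sp(3) sp(2) sp(4) sp(5) sp(7) fvu D(3)] ss' ds' an by simp
  qed
qed

lemma card_X: "card X = card Y1 + card Y2"
proof -
  have "Chi ` X = Y1 \<union> Y2"
  proof (rule subset_antisym)
    show "Chi ` X \<subseteq> Y1 \<union> Y2" using Chi_in by (intro image_subsetI)
    show "Y1 \<union> Y2 \<subseteq> Chi ` X" using Chi_surj .
  qed
  then have "card X = card (Y1 \<union> Y2)" using card_image[OF Chi_inj] by simp
  also have "\<dots> = card Y1 + card Y2"
  proof (rule card_Un_disjoint)
    show "finite Y1" unfolding Y1_def E1_def using finite_S by auto
    show "finite Y2" unfolding Y2_def E2_def using finite_S by auto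
    show "Y1 \<inter> Y2 = {}" unfolding Y1_def Y2_def E1_def E2_def by auto
  qed
  finally show ?thesis .
qed

lemma shift: "b_factor n d i j = b_factor n d (i + 1) (j + 1)"
proof -
  have "card {w \<in> S. ballot (Phi w)} = card {w \<in> G. ballot (Phi w)} + card {w \<in> E1. ballot (Phi w)} + card {w \<in> E2. ballot (Phi w)}"
    by (rule card_split3)
  also have "\<dots> = card {w \<in> G. geq 0 (B w) \<and> 1 \<le> hgt (B w) \<and> geq (- hgt (B w)) (A w)} + (card {w \<in> E1. ballot w} + card Y1) + card Y2"
    using QG QE1 QE2 by simp
  also have "\<dots> = card {w \<in> G. ballot w} + card {w \<in> E1. ballot w} + card {w \<in> E2. ballot w}"
  proof -
    have "card {w \<in> E2. ballot w} = 0" unfolding PE2 by simp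
    then show ?thesis using PG card_X by simp
  qed
  also have "\<dots> = card {w \<in> S. ballot w}" by (rule card_split3[symmetric])
  finally show ?thesis using bS bS' card_S'_ballot by simp
qed

end

lemma b_shift:
  assumes "3 \<le> n" "1 \<le> i" "i + 2 \<le> n" "1 \<le> j" "j + 2 \<le> n" "i \<noteq> j"
  shows "b_factor n d i j = b_factor n d (i + 1) (j + 1)"
proof -
  interpret tp n i j d using assms by unfold_locales
  show ?thesis by (rule shift)
qed

lemma b_diag:
  assumes "3 \<le> n" "1 \<le> a" "1 \<le> c" "a + t \<le> n - 1" "c + t \<le> n - 1" "a \<noteq> c"
  shows "b_factor n d (a + t) (c + t) = b_factor n d a c"
  using assms
proof (induction t)
  case 0 then show ?case by simp
next
  case (Suc t)
  have "b_factor n d (a + t) (c + t) = b_factor n d (a + t + 1) (c + t + 1)"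
    using Suc.prems by (intro b_shift) auto
  then show ?case using Suc by simp
qed

lemma p_diag:
  assumes "3 \<le> n" "1 \<le> a" "1 \<le> c" "a + t \<le> n - 1" "c + t \<le> n - 1"
  shows "p_factor n d (a + t) (c + t) = p_factor n d a c"
  using assms
proof (induction t)
  case 0 then show ?case by simp
next
  case (Suc t)
  have "p_factor n d (a + Suc t) (c + Suc t) = p_factor n d (a + Suc t - 1) (c + Suc t - 1)"
    using Suc.prems by (intro p_factor_shift) auto
  then show ?case using Suc by simp
qed

lemma pointwise:
  assumes H: "\<And>n d j. 3 \<le> n \<Longrightarrow> 2 \<le> j \<Longrightarrow> j \<le> n - 1 \<Longrightarrow>
             b_factor n d 1 j + b_factor n d j 1 = 2 * p_factor n d 1 j"
    and i: "i \<in> {1..n-1}" and j: "j \<in> {1..n-1}" and ij: "i < j"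
  shows "b_factor n d i j + b_factor n d j i = p_factor n d i j + p_factor n d j i"
proof -
  have n3: "3 \<le> n" using i j ij by auto
  define k where "k = j - i + 1"
  define t where "t = i - 1"
  have it: "i = 1 + t" "j = k + t" unfolding k_def t_def using i ij by auto
  have k: "2 \<le> k" "k \<le> n - 1" unfolding k_def using i j ij by auto
  have "b_factor n d i j = b_factor n d 1 k" unfolding it using b_diag[of n 1 k t d] n3 k it i j by auto
  moreover have "b_factor n d j i = b_factor n d k 1" unfolding it using b_diag[of n k 1 t d] n3 k it i j by auto
  moreover have "p_factor n d i j = p_factor n d 1 k" unfolding it using p_diag[of n 1 k t d] n3 k it i j by auto
  moreover have "p_factor n d j i = p_factor n d i j" using p_factor_sym by simp
  ultimately show ?thesis using H[OF n3 k] by simp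
qed

lemma sum_swap_pairs:
  fixes F :: "nat \<Rightarrow> nat \<Rightarrow> nat"
  shows "(\<Sum>i\<in>{1..m}. \<Sum>j\<in>{1..m} - {i}. F j i) = (\<Sum>i\<in>{1..m}. \<Sum>j\<in>{1..m} - {i}. F i j)"
proof -
  let ?T = "Sigma {1..m} (\<lambda>i. {1..m} - {i})"
  have sw: "prod.swap ` ?T = ?T" by auto
  have "(\<Sum>i\<in>{1..m}. \<Sum>j\<in>{1..m} - {i}. F j i) = (\<Sum>x\<in>?T. F (snd x) (fst x))"
    using sum_pairs[where m=m and f="\<lambda>i j. F j i"] by simp
  also have "\<dots> = (\<Sum>x\<in>prod.swap ` ?T. F (fst x) (snd x))"
    by (subst sum.reindex) (auto simp: inj_on_def)
  also have "\<dots> = (\<Sum>x\<in>?T. F (fst x) (snd x))" using sw by simp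
  also have "\<dots> = (\<Sum>i\<in>{1..m}. \<Sum>j\<in>{1..m} - {i}. F i j)" using sum_pairs[where m=m and f=F] by simp
  finally show ?thesis .
qed

lemma sums_equal:
  assumes H: "\<And>n d j. 3 \<le> n \<Longrightarrow> 2 \<le> j \<Longrightarrow> j \<le> n - 1 \<Longrightarrow>
             b_factor n d 1 j + b_factor n d j 1 = 2 * p_factor n d 1 j"
  shows "(\<Sum>i\<in>{1..n-1}. \<Sum>j\<in>{1..n-1} - {i}. b_factor n d i j) = (\<Sum>i\<in>{1..n-1}. \<Sum>j\<in>{1..n-1} - {i}. p_factor n d i j)"
proof -
  let ?M = "{1..n-1}"
  have pw: "b_factor n d i j + b_factor n d j i = p_factor n d i j + p_factor n d j i"
    if "i \<in> ?M" "j \<in> ?M" "i \<noteq> j" for i j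
  proof (cases "i < j")
    case True then show ?thesis using pointwise[OF H that(1,2)] by simp
  next
    case False then have "j < i" using that(3) by simp
    then show ?thesis using pointwise[OF H that(2,1), of d] by (metis add.commute)
  qed
  have "2 * (\<Sum>i\<in>?M. \<Sum>j\<in>?M - {i}. b_factor n d i j)
      = (\<Sum>i\<in>?M. \<Sum>j\<in>?M - {i}. b_factor n d i j) + (\<Sum>i\<in>?M. \<Sum>j\<in>?M - {i}. b_factor n d j i)"
    using sum_swap_pairs[where m="n-1" and F="b_factor n d"] by simp
  also have "\<dots> = (\<Sum>i\<in>?M. \<Sum>j\<in>?M - {i}. b_factor n d i j + b_factor n d j i)"
    by (simp add: sum.distrib)
  also have "\<dots> = (\<Sum>i\<in>?M. \<Sum>j\<in>?M - {i}. p_factor n d i j + p_factor n d j i)"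
    using pw by (intro sum.cong refl) auto
  also have "\<dots> = (\<Sum>i\<in>?M. \<Sum>j\<in>?M - {i}. p_factor n d i j) + (\<Sum>i\<in>?M. \<Sum>j\<in>?M - {i}. p_factor n d j i)"
    by (simp add: sum.distrib)
  also have "\<dots> = 2 * (\<Sum>i\<in>?M. \<Sum>j\<in>?M - {i}. p_factor n d i j)"
    using sum_swap_pairs[where m="n-1" and F="p_factor n d"] by simp
  finally show ?thesis by simp
qed

lemma perms_one: "permutations_of_set {1::nat} = {[1]}"
proof (rule set_eqI, rule iffI)
  fix xs assume "xs \<in> permutations_of_set {1::nat}"
  then have s: "set xs = {1}" and d: "distinct xs" unfolding permutations_of_set_def by auto
  have "length xs = 1" using distinct_card[OF d] s by simp
  then obtain y where "xs = [y]" by (cases xs) auto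
  then show "xs \<in> {[1]}" using s by simp
next
  fix xs assume "xs \<in> {[1::nat]}"
  then show "xs \<in> permutations_of_set {1}" unfolding permutations_of_set_def by simp
qed

lemma b_one: "b 1 d = (if d = 0 then 1 else 0)"
proof -
  have "ballot [1]" unfolding ballot_geq by simp
  moreover have "des [1] = 0" unfolding des_dsc by simp
  ultimately have "ballot_perms 1 d = (if d = 0 then {[1]} else {})"
    unfolding ballot_perms_def using perms_one by auto
  then show ?thesis unfolding b_def by simp
qed

lemma p_one: "p 1 d = (if d = 0 then 1 else 0)"
proof -
  have c: "cycles 1 id = {{1}}" unfolding cycles_def cycle_of_def by auto
  have "odd_order 1 id" unfolding odd_order_def c by simp
  moreover have "cyclic_weight 1 id = 0" unfolding cyclic_weight_def c cdes_def by simp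
  moreover have "{\<sigma>. \<sigma> permutes {1::nat..1}} = {id}" by simp
  ultimately have "odd_perms 1 d = (if d = 0 then {id} else {})" unfolding odd_perms_def by auto
  then show ?thesis unfolding p_def by simp
qed

theorem theorem3p4:
  assumes "\<And>n d j. 3 \<le> n \<Longrightarrow> 2 \<le> j \<Longrightarrow> j \<le> n - 1 \<Longrightarrow>
             b_factor n d 1 j + b_factor n d j 1 = 2 * p_factor n d 1 j"
  shows "\<And>n d. 1 \<le> n \<Longrightarrow> d \<le> (n - 1) div 2 \<Longrightarrow> b n d = p n d"
proof -
  have all: "\<forall>d. b n d = p n d" if "1 \<le> n" for n
    using that
  proof (induction n rule: nat_induct_at_least)
    case base then show ?case using b_one p_one by simp
  next
    case (Suc n)
    show ?case
    proof
      fix d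
      have n2: "2 \<le> Suc n" using Suc.hyps by simp
      have "b (Suc n) d = b n d + (\<Sum>i\<in>{1..Suc n-1}. \<Sum>j\<in>{1..Suc n-1} - {i}. b_factor (Suc n) d i j)"
        using b_rec[OF n2] by simp
      also have "\<dots> = p n d + (\<Sum>i\<in>{1..Suc n-1}. \<Sum>j\<in>{1..Suc n-1} - {i}. p_factor (Suc n) d i j)"
        using Suc.IH sums_equal[OF assms, of "Suc n" d] by simp
      also have "\<dots> = p (Suc n) d" using p_rec[OF n2] by simp
      finally show "b (Suc n) d = p (Suc n) d" .
    qed
  qed
  fix n d :: nat
  assume "1 \<le> n" "d \<le> (n - 1) div 2"
  then show "b n d = p n d" using all by blast
qed

end
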